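(* Let $\Sigma\in\mathbb{S}^d$ be a positive semidefinite sample correlation matrix (all diagonal entries equal to $1$, off-diagonal entries in $(-1,1)$), let $\lambda>0$, and let $S^{\mathrm{opt}}$ be the optimal solution of the Graphical Lasso $$\min_{S\succ 0}\; -\log\det(S)+\mathrm{trace}(\Sigma S)+\lambda\sum_{i\neq j}|S_{ij}|.$$ Let $\mathcal{G}$ be the graph on $\{1,\ldots,d\}$ with an edge $\{i,j\}$ ($i\ne j$) iff $|\Sigma_{ij}|>\lambda$, and let $C$ be the partial symmetric matrix specified on the pattern $E=\{(i,i)\}\cup\{(i,j):\{i,j\}\in\mathcal{G}\}$ by $C_{ii}=1$ and $C_{ij}=\Sigma_{ij}-\lambda\,\mathrm{sign}(\Sigma_{ij})$ for $\{i,j\}\in\mathcal{G}$. Assume that for all $i\neq j$, $S^{\mathrm{opt}}_{ij}\neq0$ if and only if $|\Sigma_{ij}|>\lambda$, and that $\lambda\geq 0.5$. Then: 1. $(S^{\mathrm{opt}})^{-1}$ is the unique max-det completion of $C$, i.e. the unique optimal solution of $\max\{\log\det X: X\succ0,\ X_{ij}=C_{ij}\text{ for all }(i,j)\in E\}$. 2. If moreover $\mathcal{G}$ is chordal, then, after relabeling the vertices so that $1,2,\ldots,d$ is a perfect elimination ordering of $\mathcal{G}$ and setting $I_j=\{i>j:\{i,j\}\in\mathcal{G}\}$, one has $S^{\mathrm{opt}}=LDL^{T}$, where $L$ is unit lower triangular with $L_{ij}=0$ for $i>j$, $i\notin I_j$, and $L_{I_jj}=-C_{I_jI_j}^{-1}C_{I_jj}$,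 and $D$ is diagonal with $D_{jj}=(C_{jj}+C_{I_jj}^{T}L_{I_jj})^{-1}$ (computed for $j=d,d-1,\ldots,1$).
   Context: A graph is chordal if it has no induced cycle of length greater than three. An ordering $1,\ldots,d$ of the vertices is a perfect elimination ordering if for every $j$ the set $I_j$ of neighbors of $j$ with larger index forms a clique; every chordal graph admits one. For index sets $I,J$, $C_{IJ}$ denotes the submatrix with rows $I$ and columns $J$; all entries of $C_{I_jI_j}$ and $C_{I_jj}$ are specified since $I_j\cup\{j\}$ is a clique. $\mathrm{sign}(x)$ is the sign of the scalar $x$. *)

theory Defs
  imports Complex_Main "Jordan_Normal_Form.Determinant" "Jordan_Normal_Form.DL_Submatrix"
    "Jordan_Normal_Form.Gauss_Jordan_Elimination"
begin

(* Matrices are JNF matrices of dimension d x d, indices 0..<d (vertex k+1 of the paper = index k). *)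

definition sym_mat :: "nat \<Rightarrow> real mat \<Rightarrow> bool" where
  "sym_mat d A \<longleftrightarrow> A \<in> carrier_mat d d \<and> A\<^sup>T = A"

definition psd_mat :: "nat \<Rightarrow> real mat \<Rightarrow> bool" where
  "psd_mat d A \<longleftrightarrow> sym_mat d A \<and> (\<forall>v \<in> carrier_vec d. v \<bullet> (A *\<^sub>v v) \<ge> 0)"

definition pd_mat :: "nat \<Rightarrow> real mat \<Rightarrow> bool" where
  "pd_mat d A \<longleftrightarrow> sym_mat d A \<and> (\<forall>v \<in> carrier_vec d. v \<noteq> 0\<^sub>v d \<longrightarrow> v \<bullet> (A *\<^sub>v v) > 0)"

definition mtrace :: "real mat \<Rightarrow> real" where
  "mtrace A = (\<Sum>i<dim_row A. A $$ (i,i))"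

definition sample_corr :: "nat \<Rightarrow> real mat \<Rightarrow> bool" where
  "sample_corr d \<Sigma> \<longleftrightarrow> psd_mat d \<Sigma> \<and> (\<forall>i<d. \<Sigma> $$ (i,i) = 1)
     \<and> (\<forall>i<d. \<forall>j<d. i \<noteq> j \<longrightarrow> -1 < \<Sigma> $$ (i,j) \<and> \<Sigma> $$ (i,j) < 1)"

definition glasso_obj :: "nat \<Rightarrow> real mat \<Rightarrow> real \<Rightarrow> real mat \<Rightarrow> real" where
  "glasso_obj d \<Sigma> lam S = - ln (det S) + mtrace (\<Sigma> * S)
      + lam * (\<Sum>i<d. \<Sum>j<d. if i \<noteq> j then \<bar>S $$ (i,j)\<bar> else 0)"

definition glasso_opt :: "nat \<Rightarrow> real mat \<Rightarrow> real \<Rightarrow> real mat \<Rightarrow> bool" where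
  "glasso_opt d \<Sigma> lam S \<longleftrightarrow> pd_mat d S \<and>
     (\<forall>S'. pd_mat d S' \<longrightarrow> glasso_obj d \<Sigma> lam S \<le> glasso_obj d \<Sigma> lam S')"

definition thr_adj :: "nat \<Rightarrow> real mat \<Rightarrow> real \<Rightarrow> nat \<Rightarrow> nat \<Rightarrow> bool" where
  "thr_adj d \<Sigma> lam i j \<longleftrightarrow> i < d \<and> j < d \<and> i \<noteq> j \<and> \<bar>\<Sigma> $$ (i,j)\<bar> > lam"

definition pattern :: "nat \<Rightarrow> real mat \<Rightarrow> real \<Rightarrow> (nat \<times> nat) set" where
  "pattern d \<Sigma> lam = {(i,i) | i. i < d} \<union> {(i,j). thr_adj d \<Sigma> lam i j}"

text \<open>the partial matrix C, represented as a full matrix whose entries outside the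
  pattern are set to 0 (they are never used)\<close>
definition Cpart :: "nat \<Rightarrow> real mat \<Rightarrow> real \<Rightarrow> real mat" where
  "Cpart d \<Sigma> lam = mat d d (\<lambda>(i,j). if i = j then 1
      else if thr_adj d \<Sigma> lam i j then \<Sigma> $$ (i,j) - lam * sgn (\<Sigma> $$ (i,j)) else 0)"

definition maxdet_feasible :: "nat \<Rightarrow> (nat \<times> nat) set \<Rightarrow> real mat \<Rightarrow> real mat \<Rightarrow> bool" where
  "maxdet_feasible d E C X \<longleftrightarrow> pd_mat d X \<and> (\<forall>(i,j) \<in> E. X $$ (i,j) = C $$ (i,j))"

definition unique_maxdet_completion :: "nat \<Rightarrow> (nat \<times> nat) set \<Rightarrow> real mat \<Rightarrow> real mat \<Rightarrow> bool" where
  "unique_maxdet_completion d E C X \<longleftrightarrow> maxdet_feasible d E C X \<and>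
     (\<forall>Y. maxdet_feasible d E C Y \<longrightarrow> Y \<noteq> X \<longrightarrow> ln (det Y) < ln (det X))"

definition chordal :: "nat \<Rightarrow> (nat \<Rightarrow> nat \<Rightarrow> bool) \<Rightarrow> bool" where
  "chordal d adj \<longleftrightarrow> (\<forall>vs. distinct vs \<and> set vs \<subseteq> {..<d} \<and> length vs \<ge> 4 \<and>
      (\<forall>k < length vs. adj (vs ! k) (vs ! ((k + 1) mod length vs))) \<longrightarrow>
      (\<exists>k < length vs. \<exists>l < length vs. k \<noteq> l \<and> l \<noteq> (k + 1) mod length vs
          \<and> k \<noteq> (l + 1) mod length vs \<and> adj (vs ! k) (vs ! l)))"

definition higher_nbrs :: "nat \<Rightarrow> (nat \<Rightarrow> nat \<Rightarrow> bool) \<Rightarrow> nat \<Rightarrow> nat set" where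
  "higher_nbrs d adj j = {i. j < i \<and> i < d \<and> adj i j}"

definition natural_peo :: "nat \<Rightarrow> (nat \<Rightarrow> nat \<Rightarrow> bool) \<Rightarrow> bool" where
  "natural_peo d adj \<longleftrightarrow> (\<forall>j<d. \<forall>a \<in> higher_nbrs d adj j. \<forall>b \<in> higher_nbrs d adj j.
       a \<noteq> b \<longrightarrow> adj a b)"

text \<open>L_{I_j j} = - C_{I_j I_j}^{-1} C_{I_j j}, as a vector indexed by positions in I_j
  (increasing order)\<close>
definition Lcol :: "real mat \<Rightarrow> nat set \<Rightarrow> nat \<Rightarrow> real vec" where
  "Lcol C I j = - (the (mat_inverse (submatrix C I I)) *\<^sub>v col (submatrix C I {j}) 0)"

definition Lmat :: "nat \<Rightarrow> (nat \<Rightarrow> nat \<Rightarrow> bool) \<Rightarrow> real mat \<Rightarrow> real mat" where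
  "Lmat d adj C = mat d d (\<lambda>(i,j). if i = j then 1
      else if i \<in> higher_nbrs d adj j
        then Lcol C (higher_nbrs d adj j) j $ card {a \<in> higher_nbrs d adj j. a < i}
      else 0)"

definition Dmat :: "nat \<Rightarrow> (nat \<Rightarrow> nat \<Rightarrow> bool) \<Rightarrow> real mat \<Rightarrow> real mat" where
  "Dmat d adj C = mat d d (\<lambda>(i,j). if i = j then
      inverse (C $$ (j,j) + col (submatrix C (higher_nbrs d adj j) {j}) 0
                 \<bullet> Lcol C (higher_nbrs d adj j) j)
      else 0)"

end

theory Submission
  imports Defs
begin

lemma mult_entry:
  assumes "A \<in> carrier_mat d d" "B \<in> carrier_mat d d" "i < d" "j < d"
  shows "(A * B) $$ (i,j) = (\<Sum>k<d. A $$ (i,k) * B $$ (k,j))"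
  using assms by (simp add: scalar_prod_def atLeast0LessThan)

lemma mv_entry:
  assumes "A \<in> carrier_mat d d" "v \<in> carrier_vec d" "i < d"
  shows "(A *\<^sub>v v) $ i = (\<Sum>k<d. A $$ (i,k) * v $ k)"
  using assms by (simp add: scalar_prod_def atLeast0LessThan)

lemma sp_sum:
  assumes "v \<in> carrier_vec d" "w \<in> carrier_vec d"
  shows "v \<bullet> w = (\<Sum>k<d. v $ k * w $ k)"
  using assms by (simp add: scalar_prod_def atLeast0LessThan)

lemma quad_form:
  assumes "A \<in> carrier_mat d d" "v \<in> carrier_vec d"
  shows "v \<bullet> (A *\<^sub>v v) = (\<Sum>a<d. \<Sum>b<d. v $ a * A $$ (a,b) * v $ b)"
proof -
  have "v \<bullet> (A *\<^sub>v v) = (\<Sum>a<d. v $ a * (A *\<^sub>v v) $ a)"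
    using assms by (simp add: sp_sum)
  also have "\<dots> = (\<Sum>a<d. v $ a * (\<Sum>b<d. A $$ (a,b) * v $ b))"
    by (intro sum.cong refl arg_cong2[where f="(*)"] mv_entry[OF assms]) simp
  also have "\<dots> = (\<Sum>a<d. \<Sum>b<d. v $ a * A $$ (a,b) * v $ b)"
    by (simp add: sum_distrib_left mult.assoc)
  finally show ?thesis .
qed

definition pdf :: "nat \<Rightarrow> (nat \<Rightarrow> nat \<Rightarrow> real) \<Rightarrow> bool" where
  "pdf n A \<longleftrightarrow> (\<forall>a<n. \<forall>b<n. A a b = A b a) \<and>
     (\<forall>v. (\<exists>a<n. v a \<noteq> 0) \<longrightarrow> 0 < (\<Sum>a<n. \<Sum>b<n. v a * A a b * v b))"

lemma pd_mat_pdf: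
  assumes "pd_mat d S"
  shows "pdf d (\<lambda>a b. S $$ (a,b))"
proof -
  have S: "S \<in> carrier_mat d d" "S\<^sup>T = S" using assms unfolding pd_mat_def sym_mat_def by auto
  have sym: "\<forall>a<d. \<forall>b<d. S $$ (a,b) = S $$ (b,a)"
  proof (intro allI impI)
    fix a b assume "a < d" "b < d"
    then have "S\<^sup>T $$ (b,a) = S $$ (a,b)" using S(1) by simp
    then show "S $$ (a,b) = S $$ (b,a)" using S(2) by simp
  qed
  have pos: "0 < (\<Sum>a<d. \<Sum>b<d. v a * S $$ (a,b) * v b)" if "\<exists>a<d. v a \<noteq> 0" for v
  proof -
    let ?w = "vec d v"
    have w: "?w \<in> carrier_vec d" by simp
    have "?w \<noteq> 0\<^sub>v d"
    proof
      assume "?w = 0\<^sub>v d"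
      then have "\<forall>a<d. v a = 0" by (metis index_vec index_zero_vec(1))
      then show False using that by auto
    qed
    then have "0 < ?w \<bullet> (S *\<^sub>v ?w)" using assms w unfolding pd_mat_def by auto
    also have "?w \<bullet> (S *\<^sub>v ?w) = (\<Sum>a<d. \<Sum>b<d. v a * S $$ (a,b) * v b)"
      using quad_form[OF S(1) w] by simp
    finally show ?thesis .
  qed
  show ?thesis unfolding pdf_def using sym pos by blast
qed

lemma pdf_pd_mat:
  assumes "sym_mat d S" "pdf d (\<lambda>a b. S $$ (a,b))"
  shows "pd_mat d S"
proof -
  have S: "S \<in> carrier_mat d d" using assms unfolding sym_mat_def by auto
  show ?thesis unfolding pd_mat_def
  proof (intro conjI assms(1) ballI impI)
    fix v :: "real vec" assume v: "v \<in> carrier_vec d" "v \<noteq> 0\<^sub>v d"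
    have "\<exists>a<d. v $ a \<noteq> 0"
    proof (rule ccontr)
      assume "\<not> ?thesis"
      then have "v = 0\<^sub>v d" using v by (intro eq_vecI) auto
      then show False using v by simp
    qed
    then have "0 < (\<Sum>a<d. \<Sum>b<d. v $ a * S $$ (a,b) * v $ b)"
      using assms(2) unfolding pdf_def by blast
    then show "0 < v \<bullet> (S *\<^sub>v v)" using quad_form[OF S v(1)] by simp
  qed
qed

lemma ldl_exists:
  "pdf n A \<Longrightarrow> \<exists>L D. (\<forall>a. L a a = 1) \<and> (\<forall>a b. a < b \<longrightarrow> L a b = 0) \<and> (\<forall>a<n. 0 < D a)
     \<and> (\<forall>a<n. \<forall>b<n. A a b = (\<Sum>k<n. L a k * D k * L b k))"
proof (induction n arbitrary: A)
  case 0
  show ?case by (rule exI[of _ "\<lambda>a b. if a = b then 1 else 0"], rule exI[of _ "\<lambda>_. 1"]) auto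
next
  case (Suc n)
  have symA: "\<And>a b. a < Suc n \<Longrightarrow> b < Suc n \<Longrightarrow> A a b = A b a"
    using Suc.prems unfolding pdf_def by blast
  have posA: "\<And>v. \<exists>a<Suc n. v a \<noteq> 0 \<Longrightarrow> 0 < (\<Sum>a<Suc n. \<Sum>b<Suc n. v a * A a b * v b)"
    using Suc.prems unfolding pdf_def by blast
  define p where "p = A 0 0"
  have "0 < (\<Sum>a<Suc n. \<Sum>b<Suc n. (if a = 0 then 1 else 0) * A a b * (if b = 0 then 1 else (0::real)))"
    by (rule posA) auto
  then have p: "0 < p" unfolding p_def by (simp del: sum.lessThan_Suc add: sum.lessThan_Suc_shift)
  define B where "B = (\<lambda>a b. A (Suc a) (Suc b) - A (Suc a) 0 * A 0 (Suc b) / p)"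
  have "pdf n B"
    unfolding pdf_def
  proof (intro conjI allI impI)
    fix a b assume "a < n" "b < n"
    then show "B a b = B b a" unfolding B_def using symA[of "Suc a" "Suc b"] symA[of "Suc a" 0] symA[of "Suc b" 0]
      by simp
  next
    fix v :: "nat \<Rightarrow> real" assume v: "\<exists>a<n. v a \<noteq> 0"
    define s where "s = (\<Sum>b<n. A 0 (Suc b) * v b)"
    define x where "x = (\<lambda>k. if k = 0 then - s / p else v (k - 1))"
    define T where "T = (\<Sum>a<n. \<Sum>b<n. v a * A (Suc a) (Suc b) * v b)"
    have s': "(\<Sum>a<n. v a * A (Suc a) 0) = s" unfolding s_def
      by (intro sum.cong refl) (simp add: symA[of _ 0])
    have "(\<Sum>a<Suc n. \<Sum>b<Suc n. x a * A a b * x b)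
        = x 0 * A 0 0 * x 0 + (\<Sum>b<n. x 0 * A 0 (Suc b) * v b)
          + (\<Sum>a<n. v a * A (Suc a) 0 * x 0) + T"
      unfolding T_def x_def by (simp del: sum.lessThan_Suc add: sum.lessThan_Suc_shift sum.distrib sum_subtractf sum_negf)
    also have "\<dots> = x 0 * p * x 0 + x 0 * s + s * x 0 + T"
    proof -
      have a1: "(\<Sum>b<n. x 0 * A 0 (Suc b) * v b) = x 0 * s" unfolding s_def by (simp add: sum_distrib_left mult.assoc)
      have a2: "(\<Sum>a<n. v a * A (Suc a) 0 * x 0) = s * x 0" unfolding s'[symmetric] by (simp add: sum_distrib_right)
      show ?thesis unfolding a1 a2 p_def ..
    qed
    also have "\<dots> = T - s * s / p" unfolding x_def using p by (simp add: field_simps power2_eq_square)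
    also have "\<dots> = (\<Sum>a<n. \<Sum>b<n. v a * B a b * v b)"
    proof -
      have "(\<Sum>a<n. \<Sum>b<n. v a * B a b * v b) = T - (\<Sum>a<n. \<Sum>b<n. (v a * A (Suc a) 0) * (A 0 (Suc b) * v b)) / p"
        unfolding T_def B_def by (simp add: algebra_simps sum_subtractf sum_divide_distrib)
      also have "(\<Sum>a<n. \<Sum>b<n. (v a * A (Suc a) 0) * (A 0 (Suc b) * v b)) = s * s"
        unfolding sum_product[symmetric] s' s_def ..
      finally show ?thesis by simp
    qed
    finally have eq: "(\<Sum>a<Suc n. \<Sum>b<Suc n. x a * A a b * x b) = (\<Sum>a<n. \<Sum>b<n. v a * B a b * v b)" .
    from v obtain a where "a < n" "v a \<noteq> 0" by blast
    then have "\<exists>a<Suc n. x a \<noteq> 0" unfolding x_def by (intro exI[of _ "Suc a"]) auto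
    from posA[OF this] eq show "0 < (\<Sum>a<n. \<Sum>b<n. v a * B a b * v b)" by simp
  qed
  from Suc.IH[OF this] obtain L' D' where L'D':
    "\<forall>a. L' a a = 1" "\<forall>a b. a < b \<longrightarrow> L' a b = 0" "\<forall>a<n. 0 < D' a"
    "\<forall>a<n. \<forall>b<n. B a b = (\<Sum>k<n. L' a k * D' k * L' b k)" by blast
  define L where "L = (\<lambda>a b. if b = 0 then (if a = 0 then 1 else A a 0 / p)
       else if a = 0 then 0 else L' (a - 1) (b - 1))"
  define D where "D = (\<lambda>k. if k = 0 then p else D' (k - 1))"
  have fac: "A a b = (\<Sum>k<Suc n. L a k * D k * L b k)" if ab: "a < Suc n" "b < Suc n" for a b
  proof -
    have "(\<Sum>k<Suc n. L a k * D k * L b k) = L a 0 * p * L b 0 + (\<Sum>k<n. L a (Suc k) * D' k * L b (Suc k))"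
      by (simp del: sum.lessThan_Suc add: sum.lessThan_Suc_shift D_def)
    also have "\<dots> = A a b"
    proof (cases a)
      case 0
      then show ?thesis
      proof (cases b)
        case 0
        then show ?thesis using \<open>a = 0\<close> by (simp add: L_def p_def)
      next
        case (Suc b')
        then show ?thesis using \<open>a = 0\<close> p symA[of 0 b] ab by (simp add: L_def)
      qed
    next
      case (Suc a')
      then show ?thesis
      proof (cases b)
        case 0
        then show ?thesis using \<open>a = Suc a'\<close> p by (simp add: L_def)
      next
        case (Suc b')
        have "(\<Sum>k<n. L a (Suc k) * D' k * L b (Suc k)) = B a' b'"
          using L'D'(4) \<open>a = Suc a'\<close> \<open>b = Suc b'\<close> ab by (simp add: L_def)
        then show ?thesis using \<open>a = Suc a'\<close> \<open>b = Suc b'\<close> p symA[of 0 b] ab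
          by (simp add: L_def B_def field_simps)
      qed
    qed
    finally show ?thesis by simp
  qed
  show ?case
  proof (intro exI[of _ L] exI[of _ D] conjI allI impI)
    fix a show "L a a = 1" using L'D'(1) by (simp add: L_def)
  next
    fix a b :: nat assume "a < b" then show "L a b = 0" using L'D'(2) by (simp add: L_def)
  next
    fix a assume "a < Suc n" then show "0 < D a" using L'D'(3) p by (simp add: D_def)
  next
    fix a b assume "a < Suc n" "b < Suc n" then show "A a b = (\<Sum>k<Suc n. L a k * D k * L b k)" by (rule fac)
  qed
qed

definition dg :: "nat \<Rightarrow> (nat \<Rightarrow> real) \<Rightarrow> real mat" where
  "dg n D = mat n n (\<lambda>(a,b). if a = b then D a else 0)"

lemma dg_carrier[simp]: "dg n D \<in> carrier_mat n n" unfolding dg_def by simp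

lemma LDLT_entry:
  assumes L: "L \<in> carrier_mat n n" and ab: "a < n" "b < n"
  shows "(L * dg n D * L\<^sup>T) $$ (a,b) = (\<Sum>k<n. L $$ (a,k) * D k * L $$ (b,k))"
proof -
  have LD: "L * dg n D \<in> carrier_mat n n" using L by simp
  have "(L * dg n D * L\<^sup>T) $$ (a,b) = (\<Sum>k<n. (L * dg n D) $$ (a,k) * L\<^sup>T $$ (k,b))"
    by (rule mult_entry[OF LD _ ab]) (use L in simp)
  also have "\<dots> = (\<Sum>k<n. L $$ (a,k) * D k * L $$ (b,k))"
  proof (intro sum.cong refl)
    fix k assume k: "k \<in> {..<n}"
    have "(L * dg n D) $$ (a,k) = (\<Sum>m<n. L $$ (a,m) * dg n D $$ (m,k))"
      using mult_entry[OF L dg_carrier ab(1)] k by simp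
    also have "\<dots> = (\<Sum>m<n. if m = k then L $$ (a,m) * D k else 0)"
      by (intro sum.cong refl) (use k in \<open>auto simp: dg_def\<close>)
    also have "\<dots> = L $$ (a,k) * D k" using k by simp
    finally show "(L * dg n D) $$ (a,k) * L\<^sup>T $$ (k,b) = L $$ (a,k) * D k * L $$ (b,k)"
      using k ab L by simp
  qed
  finally show ?thesis .
qed

lemma pd_mat_carrier: "pd_mat d S \<Longrightarrow> S \<in> carrier_mat d d"
  unfolding pd_mat_def sym_mat_def by auto

lemma pd_mat_sym_entry: "pd_mat d S \<Longrightarrow> a < d \<Longrightarrow> b < d \<Longrightarrow> S $$ (a,b) = S $$ (b,a)"
  using pd_mat_pdf unfolding pdf_def by blast

lemma ldl_mat:
  assumes "pd_mat n S"
  shows "\<exists>L D. L \<in> carrier_mat n n \<and> (\<forall>a<n. L $$ (a,a) = 1) \<and> (\<forall>a b. a < b \<longrightarrow> b < n \<longrightarrow> L $$ (a,b) = 0)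
     \<and> (\<forall>a<n. 0 < D a) \<and> S = L * dg n D * L\<^sup>T"
proof -
  from ldl_exists[OF pd_mat_pdf[OF assms]] obtain L D where LD:
    "\<forall>a. L a a = 1" "\<forall>a b. a < b \<longrightarrow> L a b = 0" "\<forall>a<n. 0 < D a"
    "\<forall>a<n. \<forall>b<n. S $$ (a,b) = (\<Sum>k<n. L a k * D k * L b k)" by blast
  let ?L = "mat n n (\<lambda>(a,b). L a b)"
  have S: "S \<in> carrier_mat n n" using assms by (rule pd_mat_carrier)
  have "S = ?L * dg n D * ?L\<^sup>T"
  proof (rule eq_matI)
    fix a b assume ab: "a < dim_row (?L * dg n D * ?L\<^sup>T)" "b < dim_col (?L * dg n D * ?L\<^sup>T)"
    then have ab': "a < n" "b < n" by auto
    have "(?L * dg n D * ?L\<^sup>T) $$ (a,b) = (\<Sum>k<n. ?L $$ (a,k) * D k * ?L $$ (b,k))"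
      by (rule LDLT_entry) (use ab' in auto)
    then show "S $$ (a,b) = (?L * dg n D * ?L\<^sup>T) $$ (a,b)"
      using ab' LD(4) by simp
  qed (use S in auto)
  then show ?thesis using LD by (intro exI[of _ ?L] exI[of _ D]) auto
qed

lemma prod_list_diag:
  assumes "A \<in> carrier_mat n n"
  shows "prod_list (diag_mat A) = (\<Prod>k<n. A $$ (k,k))"
proof -
  have "diag_mat A = map (\<lambda>k. A $$ (k,k)) [0..<n]" using assms unfolding diag_mat_def by auto
  then show ?thesis by (simp add: prod.distinct_set_conv_list[symmetric] atLeast0LessThan)
qed

lemma det_unit_lower:
  assumes L: "L \<in> carrier_mat n n" and "\<forall>a<n. L $$ (a,a) = 1" "\<forall>a b. a < b \<longrightarrow> b < n \<longrightarrow> L $$ (a,b) = 0"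
  shows "det L = 1"
proof -
  have "det L = prod_list (diag_mat L)" using assms by (intro det_lower_triangular) auto
  also have "\<dots> = 1" unfolding prod_list_diag[OF L] using assms by simp
  finally show ?thesis .
qed

lemma det_dg: "det (dg n D) = (\<Prod>k<n. D k)"
proof -
  have "det (dg n D) = prod_list (diag_mat (dg n D))" by (rule det_lower_triangular[where n=n]) (auto simp: dg_def)
  also have "\<dots> = (\<Prod>k<n. D k)" unfolding prod_list_diag[OF dg_carrier] by (simp add: dg_def)
  finally show ?thesis .
qed

lemma det_LDLT:
  assumes L: "L \<in> carrier_mat n n" and "\<forall>a<n. L $$ (a,a) = 1" "\<forall>a b. a < b \<longrightarrow> b < n \<longrightarrow> L $$ (a,b) = 0"
  shows "det (L * dg n D * L\<^sup>T) = (\<Prod>k<n. D k)"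
proof -
  have "det (L * dg n D * L\<^sup>T) = det (L * dg n D) * det (L\<^sup>T)"
    by (rule det_mult[of _ n]) (use L in auto)
  also have "\<dots> = det L * det (dg n D) * det L"
    using det_mult[OF L dg_carrier] det_transpose[OF L] by simp
  finally show ?thesis using det_unit_lower[OF assms] det_dg by simp
qed

lemma logdet_ineq:
  assumes "pd_mat n M"
  shows "0 < det M" "ln (det M) \<le> mtrace M - real n"
    "ln (det M) = mtrace M - real n \<Longrightarrow> M = 1\<^sub>m n"
proof -
  from ldl_mat[OF assms] obtain L D where LD: "L \<in> carrier_mat n n" "\<forall>a<n. L $$ (a,a) = 1"
    "\<forall>a b. a < b \<longrightarrow> b < n \<longrightarrow> L $$ (a,b) = 0" "\<forall>a<n. 0 < D a" "M = L * dg n D * L\<^sup>T" by blast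
  have M: "M \<in> carrier_mat n n" using assms by (rule pd_mat_carrier)
  have det: "det M = (\<Prod>k<n. D k)" using det_LDLT[OF LD(1-3)] LD(5) by simp
  show "0 < det M" unfolding det using LD(4) by (intro prod_pos) auto
  have ln: "ln (det M) = (\<Sum>k<n. ln (D k))" unfolding det using LD(4) by (subst ln_prod) auto
  define q where "q k = (\<Sum>a<n. (L $$ (a,k))\<^sup>2)" for k
  have tr: "mtrace M = (\<Sum>k<n. D k * q k)"
  proof -
    have "mtrace M = (\<Sum>a<n. \<Sum>k<n. L $$ (a,k) * D k * L $$ (a,k))"
    proof -
      have "mtrace M = (\<Sum>a<n. M $$ (a,a))" unfolding mtrace_def using M by simp
      also have "\<dots> = (\<Sum>a<n. \<Sum>k<n. L $$ (a,k) * D k * L $$ (a,k))"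
        by (intro sum.cong refl) (use LD(5) LDLT_entry[OF LD(1)] in simp)
      finally show ?thesis .
    qed
    also have "\<dots> = (\<Sum>k<n. \<Sum>a<n. L $$ (a,k) * D k * L $$ (a,k))" by (rule sum.swap)
    also have "\<dots> = (\<Sum>k<n. D k * q k)" unfolding q_def
      by (simp add: sum_distrib_left power2_eq_square mult.commute mult.left_commute)
    finally show ?thesis .
  qed
  have q1: "1 \<le> q k" if "k < n" for k
  proof -
    have "(L $$ (k,k))\<^sup>2 \<le> q k" unfolding q_def by (rule member_le_sum) (use that in auto)
    then show ?thesis using LD(2) that by simp
  qed
  define g where "g k = D k * q k - 1 - ln (D k)" for k
  have g0: "0 \<le> g k" if "k < n" for k
  proof -
    have "ln (D k) \<le> D k - 1" using LD(4) that by (simp add: ln_le_minus_one)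
    moreover have "D k \<le> D k * q k" using q1[OF that] LD(4) that by simp
    ultimately show ?thesis unfolding g_def by simp
  qed
  have diff: "mtrace M - real n - ln (det M) = (\<Sum>k<n. g k)"
    unfolding tr ln g_def by (simp add: sum_subtractf)
  show "ln (det M) \<le> mtrace M - real n" using diff g0 sum_nonneg[of "{..<n}" g] by simp
  assume eq: "ln (det M) = mtrace M - real n"
  then have "(\<Sum>k<n. g k) = 0" using diff by simp
  then have gz: "\<forall>k\<in>{..<n}. g k = 0" using g0 by (subst sum_nonneg_eq_0_iff[symmetric]) auto
  have D1: "D k = 1" and q1': "q k = 1" if "k < n" for k
  proof -
    have "ln (D k) \<le> D k - 1" using LD(4) that by (simp add: ln_le_minus_one)
    moreover have "D k \<le> D k * q k" using q1[OF that] LD(4) that by simp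
    moreover have "D k * q k - 1 - ln (D k) = 0" using gz that unfolding g_def by auto
    ultimately have "ln (D k) = D k - 1" by linarith
    then show "D k = 1" using LD(4) that ln_eq_minus_one by blast
    moreover have "D k * q k - 1 - ln (D k) = 0" using gz that unfolding g_def by auto
    ultimately show "q k = 1" by simp
  qed
  have L0: "L $$ (a,k) = 0" if "a < n" "k < n" "a \<noteq> k" for a k
  proof -
    have "q k = (L $$ (k,k))\<^sup>2 + (\<Sum>a\<in>{..<n} - {k}. (L $$ (a,k))\<^sup>2)"
      unfolding q_def using that by (subst sum.remove[of _ k]) auto
    then have "(\<Sum>a\<in>{..<n} - {k}. (L $$ (a,k))\<^sup>2) = 0" using q1' LD(2) that by simp
    then have "\<forall>a\<in>{..<n} - {k}. (L $$ (a,k))\<^sup>2 = 0" by (subst sum_nonneg_eq_0_iff[symmetric]) auto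
    then show ?thesis using that by auto
  qed
  show "M = 1\<^sub>m n"
  proof (rule eq_matI)
    fix a b assume "a < dim_row (1\<^sub>m n)" "b < dim_col (1\<^sub>m n)"
    then have ab: "a < n" "b < n" by auto
    have "M $$ (a,b) = (\<Sum>k<n. L $$ (a,k) * D k * L $$ (b,k))" using LD(5) LDLT_entry[OF LD(1) ab] by simp
    also have "\<dots> = (\<Sum>k<n. if k = a then (if a = b then 1 else 0) else 0)"
    proof (intro sum.cong refl)
      fix k assume k: "k \<in> {..<n}"
      show "L $$ (a,k) * D k * L $$ (b,k) = (if k = a then (if a = b then 1 else 0) else 0)"
        by (cases "k = a"; cases "k = b") (use ab k L0 LD(2) D1 in auto)
    qed
    also have "\<dots> = 1\<^sub>m n $$ (a,b)" using ab by (cases "a = b") auto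
    finally show "M $$ (a,b) = 1\<^sub>m n $$ (a,b)" .
  qed (use M in auto)
qed

lemma inv_setup:
  assumes S: "pd_mat d S"
  shows "\<exists>W. mat_inverse S = Some W \<and> S * W = 1\<^sub>m d \<and> W * S = 1\<^sub>m d \<and> W \<in> carrier_mat d d \<and> pd_mat d W"
proof -
  have Sc: "S \<in> carrier_mat d d" using S by (rule pd_mat_carrier)
  have ST: "S\<^sup>T = S" using S unfolding pd_mat_def sym_mat_def by auto
  have "det S \<noteq> 0" using logdet_ineq(1)[OF S] by simp
  then have "S \<in> Units (ring_mat TYPE(real) d ())" by (rule det_non_zero_imp_unit[OF Sc])
  then have "mat_inverse S \<noteq> None" using mat_inverse(1)[OF Sc, where b="()"] by blast
  then obtain W where W: "mat_inverse S = Some W" by blast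
  from mat_inverse(2)[OF Sc W] have SW: "S * W = 1\<^sub>m d" "W * S = 1\<^sub>m d" "W \<in> carrier_mat d d" by auto
  have WT: "W\<^sup>T = W"
  proof -
    have "W\<^sup>T * S = 1\<^sub>m d"
    proof -
      have "(S * W)\<^sup>T = W\<^sup>T * S\<^sup>T" by (rule transpose_mult[OF Sc SW(3)])
      then show ?thesis using SW(1) ST by simp
    qed
    have WTc: "W\<^sup>T \<in> carrier_mat d d" using SW(3) by simp
    have "W\<^sup>T = W\<^sup>T * (S * W)" using SW(1) WTc by simp
    also have "\<dots> = (W\<^sup>T * S) * W" using WTc Sc SW(3) by (metis assoc_mult_mat)
    also have "\<dots> = W" using \<open>W\<^sup>T * S = 1\<^sub>m d\<close> SW(3) by simp
    finally show ?thesis .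
  qed
  have pdW: "pd_mat d W"
    unfolding pd_mat_def sym_mat_def
  proof (intro conjI ballI impI SW(3) WT)
    fix v :: "real vec" assume v: "v \<in> carrier_vec d" "v \<noteq> 0\<^sub>v d"
    define u where "u = W *\<^sub>v v"
    have u: "u \<in> carrier_vec d" unfolding u_def using SW(3) v by simp
    have Su: "S *\<^sub>v u = v" unfolding u_def using SW Sc v
      by (metis assoc_mult_mat_vec one_mult_mat_vec)
    have "u \<noteq> 0\<^sub>v d"
    proof
      assume "u = 0\<^sub>v d" then have "S *\<^sub>v u = 0\<^sub>v d" using Sc
        by (intro eq_vecI) (auto simp: scalar_prod_def)
      then show False using Su v by simp
    qed
    then have "0 < u \<bullet> (S *\<^sub>v u)" using S u unfolding pd_mat_def by auto
    also have "u \<bullet> (S *\<^sub>v u) = u \<bullet> v" using Su by simp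
    also have "\<dots> = v \<bullet> u" by (rule comm_scalar_prod[of _ d]) (use u v in auto)
    also have "\<dots> = v \<bullet> (W *\<^sub>v v)" unfolding u_def ..
    finally show "0 < v \<bullet> (W *\<^sub>v v)" .
  qed
  show ?thesis using W SW pdW by blast
qed

lemma cofactor_inv:
  assumes S: "S \<in> carrier_mat d d" and SW: "S * W = 1\<^sub>m d" and W: "W \<in> carrier_mat d d"
    and ij: "i < d" "j < d"
  shows "cofactor S i j = det S * W $$ (j,i)"
proof -
  have A: "adj_mat S \<in> carrier_mat d d" "adj_mat S * S = det S \<cdot>\<^sub>m 1\<^sub>m d" using adj_mat[OF S] by auto
  have "adj_mat S = adj_mat S * (S * W)" using SW A by simp
  also have "\<dots> = (adj_mat S * S) * W" using A S W by (metis assoc_mult_mat)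
  also have "\<dots> = det S \<cdot>\<^sub>m W" using A W mult_smult_assoc_mat[of "1\<^sub>m d" d d W d "det S"] by simp
  finally have "adj_mat S $$ (j,i) = (det S \<cdot>\<^sub>m W) $$ (j,i)" by simp
  then show ?thesis using S W ij unfolding adj_mat_def by simp
qed

lemma det_row_change:
  assumes A: "A \<in> carrier_mat n n" and B: "B \<in> carrier_mat n n" and r: "r < n"
    and same: "\<And>a b. a < n \<Longrightarrow> b < n \<Longrightarrow> a \<noteq> r \<Longrightarrow> A $$ (a,b) = B $$ (a,b)"
  shows "det A = det B + (\<Sum>k<n. (A $$ (r,k) - B $$ (r,k)) * cofactor B r k)"
proof -
  have cof: "cofactor A r k = cofactor B r k" if k: "k < n" for k
  proof -
    have "mat_delete A r k = mat_delete B r k"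
    proof (rule eq_matI)
      fix a b assume ab: "a < dim_row (mat_delete B r k)" "b < dim_col (mat_delete B r k)"
      then have ab': "a < n - 1" "b < n - 1" using B by auto
      show "mat_delete A r k $$ (a,b) = mat_delete B r k $$ (a,b)"
        unfolding mat_delete_def using A B ab' by (auto intro!: same)
    qed (use A B in auto)
    then show ?thesis unfolding cofactor_def by simp
  qed
  have "det A = (\<Sum>k<n. A $$ (r,k) * cofactor B r k)"
    using laplace_expansion_row[OF A r] cof by simp
  also have "\<dots> = (\<Sum>k<n. B $$ (r,k) * cofactor B r k) + (\<Sum>k<n. (A $$ (r,k) - B $$ (r,k)) * cofactor B r k)"
    by (simp add: sum.distrib[symmetric] algebra_simps)
  also have "(\<Sum>k<n. B $$ (r,k) * cofactor B r k) = det B" using laplace_expansion_row[OF B r] by simp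
  finally show ?thesis .
qed

lemma isCont_det:
  fixes M :: "real \<Rightarrow> real mat"
  assumes M: "\<And>t. M t \<in> carrier_mat n n"
    and c: "\<And>a b. a < n \<Longrightarrow> b < n \<Longrightarrow> isCont (\<lambda>t. M t $$ (a,b)) x"
  shows "isCont (\<lambda>t. det (M t)) x"
proof -
  have eq: "(\<lambda>t. det (M t)) = (\<lambda>t. \<Sum>p \<in> {p. p permutes {0..<n}}. signof p * (\<Prod>i=0..<n. M t $$ (i, p i)))"
    using det_def'[OF M] by (intro ext) simp
  show ?thesis unfolding eq
  proof (rule isCont_sum, intro ballI)
    fix p assume p: "p \<in> {p. p permutes {0..<n}}"
    have "isCont (\<lambda>t. \<Prod>i=0..<n. M t $$ (i, p i)) x"
    proof (rule continuous_prod)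
      fix i assume i: "i \<in> {0..<n}"
      then have "p i < n" using p by (auto dest: permutes_in_image)
      then show "isCont (\<lambda>t. M t $$ (i, p i)) x" using c i by auto
    qed
    then show "isCont (\<lambda>t. of_int (sign p) * (\<Prod>i=0..<n. M t $$ (i, p i))) x"
      by (rule continuous_mult[OF continuous_const])
  qed
qed

definition ee :: "nat \<Rightarrow> nat \<Rightarrow> nat \<Rightarrow> nat \<Rightarrow> real" where
  "ee i j a b = (if a = i then (if b = j then 1 else 0) else 0)"

definition EE :: "nat \<Rightarrow> nat \<Rightarrow> nat \<Rightarrow> nat \<Rightarrow> real" where
  "EE i j a b = (if i = j then ee i i a b else ee i j a b + ee j i a b)"

definition pert :: "nat \<Rightarrow> real mat \<Rightarrow> nat \<Rightarrow> nat \<Rightarrow> real \<Rightarrow> real mat" where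
  "pert d S i j t = mat d d (\<lambda>(a,b). S $$ (a,b) + t * EE i j a b)"

definition pen :: "nat \<Rightarrow> real mat \<Rightarrow> real" where
  "pen d S = (\<Sum>i<d. \<Sum>j<d. if i \<noteq> j then \<bar>S $$ (i,j)\<bar> else 0)"

lemma glasso_obj_pen: "glasso_obj d \<Sigma> lam S = - ln (det S) + mtrace (\<Sigma> * S) + lam * pen d S"
  unfolding glasso_obj_def pen_def ..

lemma pert_carrier[simp]: "pert d S i j t \<in> carrier_mat d d" unfolding pert_def by simp

lemma pert_index: "a < d \<Longrightarrow> b < d \<Longrightarrow> pert d S i j t $$ (a,b) = S $$ (a,b) + t * EE i j a b"
  unfolding pert_def by simp

lemma double_delta:
  assumes "i < n" "j < n"
  shows "(\<Sum>a<n. \<Sum>b<n. f a b * ee i j a b) = f i j"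
proof -
  have e: "f a b * ee i j a b = (if a = i \<and> b = j then f a b else 0)" for a b
    by (simp add: ee_def)
  have "(\<Sum>b<n. f a b * ee i j a b) = (if a = i then f a j else 0)" for a
    unfolding e by (cases "a = i") (use assms in simp_all)
  then have "(\<Sum>a<n. \<Sum>b<n. f a b * ee i j a b) = (\<Sum>a<n. if a = i then f a j else 0)"
    by simp
  also have "\<dots> = f i j" using assms by simp
  finally show ?thesis .
qed

lemma EE_sym: "EE i j a b = EE i j b a"
  unfolding EE_def ee_def by auto

lemma double_EE:
  assumes "i < n" "j < n"
  shows "(\<Sum>a<n. \<Sum>b<n. f a b * EE i j a b) = (if i = j then f i i else f i j + f j i)"
proof (cases "i = j")
  case True
  then show ?thesis unfolding EE_def using double_delta[OF assms(1) assms(1)] by simp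
next
  case False
  have "(\<Sum>a<n. \<Sum>b<n. f a b * EE i j a b) = (\<Sum>a<n. \<Sum>b<n. f a b * ee i j a b) + (\<Sum>a<n. \<Sum>b<n. f a b * ee j i a b)"
    unfolding EE_def using False by (simp add: distrib_left sum.distrib)
  then show ?thesis using False double_delta[OF assms] double_delta[OF assms(2,1)] by simp
qed

lemma quad_pert:
  assumes S: "S \<in> carrier_mat d d" and v: "v \<in> carrier_vec d" and ij: "i < d" "j < d"
  shows "v \<bullet> (pert d S i j t *\<^sub>v v) = v \<bullet> (S *\<^sub>v v) + t * (if i = j then (v $ i)\<^sup>2 else 2 * (v $ i * v $ j))"
proof -
  have "v \<bullet> (pert d S i j t *\<^sub>v v) = (\<Sum>a<d. \<Sum>b<d. v $ a * (S $$ (a,b) + t * EE i j a b) * v $ b)"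
    using quad_form[OF pert_carrier v] by (simp add: pert_index)
  also have "\<dots> = (\<Sum>a<d. \<Sum>b<d. v $ a * S $$ (a,b) * v $ b) + t * (\<Sum>a<d. \<Sum>b<d. (v $ a * v $ b) * EE i j a b)"
    by (simp add: algebra_simps sum.distrib sum_distrib_left)
  also have "\<dots> = v \<bullet> (S *\<^sub>v v) + t * (if i = j then (v $ i)\<^sup>2 else 2 * (v $ i * v $ j))"
    unfolding double_EE[OF ij] quad_form[OF S v] by (simp add: power2_eq_square)
  finally show ?thesis .
qed

lemma sym_pert:
  assumes "sym_mat d S"
  shows "sym_mat d (pert d S i j t)"
proof -
  have S: "S \<in> carrier_mat d d" "S\<^sup>T = S" using assms unfolding sym_mat_def by auto
  have "(pert d S i j t)\<^sup>T = pert d S i j t"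
  proof (rule eq_matI)
    fix a b assume "a < dim_row (pert d S i j t)" "b < dim_col (pert d S i j t)"
    then have ab: "a < d" "b < d" by (auto simp: pert_def)
    have "S $$ (b,a) = S $$ (a,b)" using S ab by (metis carrier_matD index_transpose_mat(1))
    then show "(pert d S i j t)\<^sup>T $$ (a,b) = pert d S i j t $$ (a,b)"
      using ab by (simp add: pert_def EE_sym[of i j a b])
  qed (auto simp: pert_def)
  then show ?thesis unfolding sym_mat_def by simp
qed

lemma trace_pert:
  assumes A: "A \<in> carrier_mat d d" and S: "S \<in> carrier_mat d d" and ij: "i < d" "j < d"
  shows "mtrace (A * pert d S i j t) = mtrace (A * S) + t * (if i = j then A $$ (i,i) else A $$ (j,i) + A $$ (i,j))"
proof -
  have tr: "mtrace (A * B) = (\<Sum>a<d. \<Sum>k<d. A $$ (a,k) * B $$ (k,a))" if B: "B \<in> carrier_mat d d" for B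
  proof -
    have "mtrace (A * B) = (\<Sum>a<d. (A * B) $$ (a,a))" unfolding mtrace_def using A by simp
    also have "\<dots> = (\<Sum>a<d. \<Sum>k<d. A $$ (a,k) * B $$ (k,a))"
      by (intro sum.cong refl mult_entry[OF A B]) auto
    finally show ?thesis .
  qed
  have "mtrace (A * pert d S i j t) = (\<Sum>a<d. \<Sum>k<d. A $$ (a,k) * (S $$ (k,a) + t * EE i j k a))"
    unfolding tr[OF pert_carrier] by (intro sum.cong refl) (simp add: pert_index)
  also have "\<dots> = mtrace (A * S) + t * (\<Sum>a<d. \<Sum>k<d. A $$ (a,k) * EE i j a k)"
    unfolding tr[OF S] by (simp add: algebra_simps sum.distrib sum_distrib_left EE_sym[of i j _ _])
  also have "(\<Sum>a<d. \<Sum>k<d. A $$ (a,k) * EE i j a k) = (if i = j then A $$ (i,i) else A $$ (j,i) + A $$ (i,j))"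
    using double_EE[OF ij, of "\<lambda>a k. A $$ (a,k)"] by simp
  finally show ?thesis .
qed

lemma pen_pert_diag:
  assumes "i < d"
  shows "pen d (pert d S i i t) = pen d S"
  unfolding pen_def
  by (intro sum.cong refl) (auto simp: pert_index EE_def ee_def)

lemma pen_pert_off:
  assumes ij: "i < d" "j < d" "i \<noteq> j" and sym: "S $$ (j,i) = S $$ (i,j)"
  shows "pen d (pert d S i j t) = pen d S + 2 * (\<bar>S $$ (i,j) + t\<bar> - \<bar>S $$ (i,j)\<bar>)"
proof -
  define c where "c = \<bar>S $$ (i,j) + t\<bar> - \<bar>S $$ (i,j)\<bar>"
  have pt: "(if a \<noteq> b then \<bar>pert d S i j t $$ (a,b)\<bar> else 0) = (if a \<noteq> b then \<bar>S $$ (a,b)\<bar> else 0) + c * EE i j a b"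
    if ab: "a < d" "b < d" for a b
    using ij sym ab by (auto simp: pert_index EE_def ee_def c_def)
  have "pen d (pert d S i j t) = pen d S + (\<Sum>a<d. \<Sum>b<d. c * EE i j a b)"
    unfolding pen_def by (simp add: pt sum.distrib)
  also have "(\<Sum>a<d. \<Sum>b<d. c * EE i j a b) = c + c"
    using double_EE[OF ij(1,2), of "\<lambda>a b. c"] ij by simp
  finally show ?thesis unfolding c_def by simp
qed

lemma det_pert:
  assumes S: "S \<in> carrier_mat d d" and ij: "i < d" "j < d"
  shows "\<exists>g. isCont g 0 \<and> g 0 = (if i = j then cofactor S i i else cofactor S i j + cofactor S j i)
     \<and> (\<forall>t. det (pert d S i j t) = det S + t * g t)"
proof (cases "i = j")
  case True
  have "det (pert d S i j t) = det S + t * cofactor S i i" for t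
  proof -
    have "det (pert d S i j t) = det S + (\<Sum>k<d. (pert d S i j t $$ (i,k) - S $$ (i,k)) * cofactor S i k)"
      by (rule det_row_change[OF pert_carrier S ij(1)]) (use True ij in \<open>auto simp: pert_index EE_def ee_def\<close>)
    also have "(\<Sum>k<d. (pert d S i j t $$ (i,k) - S $$ (i,k)) * cofactor S i k) = (\<Sum>k<d. if k = i then t * cofactor S i i else 0)"
      by (intro sum.cong refl) (use True ij in \<open>auto simp: pert_index EE_def ee_def\<close>)
    finally show ?thesis using ij by simp
  qed
  then show ?thesis using True by (intro exI[of _ "\<lambda>_. cofactor S i i"]) auto
next
  case False
  define S1 where "S1 t = mat d d (\<lambda>(a,b). S $$ (a,b) + t * ee i j a b)" for t
  have S1c: "S1 t \<in> carrier_mat d d" for t unfolding S1_def by simp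
  have S1i: "a < d \<Longrightarrow> b < d \<Longrightarrow> S1 t $$ (a,b) = S $$ (a,b) + t * ee i j a b" for a b t
    unfolding S1_def by simp
  have d1: "det (S1 t) = det S + t * cofactor S i j" for t
  proof -
    have "det (S1 t) = det S + (\<Sum>k<d. (S1 t $$ (i,k) - S $$ (i,k)) * cofactor S i k)"
      by (rule det_row_change[OF S1c S ij(1)]) (use ij in \<open>auto simp: S1i ee_def\<close>)
    also have "(\<Sum>k<d. (S1 t $$ (i,k) - S $$ (i,k)) * cofactor S i k) = (\<Sum>k<d. if k = j then t * cofactor S i j else 0)"
      by (intro sum.cong refl) (use ij in \<open>auto simp: S1i ee_def\<close>)
    finally show ?thesis using ij by simp
  qed
  have d2: "det (pert d S i j t) = det (S1 t) + t * cofactor (S1 t) j i" for t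
  proof -
    have "det (pert d S i j t) = det (S1 t) + (\<Sum>k<d. (pert d S i j t $$ (j,k) - S1 t $$ (j,k)) * cofactor (S1 t) j k)"
      by (rule det_row_change[OF pert_carrier S1c ij(2)]) (use False ij in \<open>auto simp: S1i pert_index EE_def ee_def\<close>)
    also have "(\<Sum>k<d. (pert d S i j t $$ (j,k) - S1 t $$ (j,k)) * cofactor (S1 t) j k) = (\<Sum>k<d. if k = i then t * cofactor (S1 t) j i else 0)"
      by (intro sum.cong refl) (use False ij in \<open>auto simp: S1i pert_index EE_def ee_def\<close>)
    finally show ?thesis using ij by simp
  qed
  define g where "g t = cofactor S i j + cofactor (S1 t) j i" for t
  have S10: "S1 0 = S" by (rule eq_matI) (use S in \<open>auto simp: S1_def\<close>)
  have cont: "isCont (\<lambda>t. cofactor (S1 t) j i) 0"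
  proof -
    have "isCont (\<lambda>t. det (mat_delete (S1 t) j i)) 0"
    proof (rule isCont_det[where n = "d - 1"])
      fix t show "mat_delete (S1 t) j i \<in> carrier_mat (d - 1) (d - 1)" using mat_delete_carrier[OF S1c] by simp
    next
      fix a b assume ab: "a < d - 1" "b < d - 1"
      have eq: "(\<lambda>t. mat_delete (S1 t) j i $$ (a,b)) = (\<lambda>t. S $$ (if a < j then a else Suc a, if b < i then b else Suc b)
          + t * ee i j (if a < j then a else Suc a) (if b < i then b else Suc b))"
        using ab by (intro ext) (auto simp: mat_delete_def S1_def)
      show "isCont (\<lambda>t. mat_delete (S1 t) j i $$ (a,b)) 0" unfolding eq by (intro continuous_intros)
    qed
    then show ?thesis unfolding cofactor_def by (intro continuous_intros)
  qed
  show ?thesis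
  proof (intro exI[of _ g] conjI allI)
    show "isCont g 0" unfolding g_def using cont by (intro continuous_intros)
    show "g 0 = (if i = j then cofactor S i i else cofactor S i j + cofactor S j i)"
      using False unfolding g_def S10 by simp
    fix t show "det (pert d S i j t) = det S + t * g t" unfolding d2 d1 g_def by (simp add: algebra_simps)
  qed
qed

lemma pdf_psd: "pdf n A \<Longrightarrow> 0 \<le> (\<Sum>a<n. \<Sum>b<n. v a * A a b * v b)"
proof (cases "\<exists>a<n. v a \<noteq> 0")
  case True
  assume "pdf n A"
  then show ?thesis using True unfolding pdf_def by (simp add: less_imp_le)
next
  case False
  then show ?thesis by simp
qed

lemma pd_diag_pos:
  assumes "pd_mat d W" "k < d"
  shows "0 < W $$ (k,k)"
proof -
  let ?v = "\<lambda>a. if a = k then 1 else (0::real)"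
  have "0 < (\<Sum>a<d. \<Sum>b<d. ?v a * W $$ (a,b) * ?v b)"
    using pd_mat_pdf[OF assms(1)] assms(2) unfolding pdf_def by auto
  also have "(\<Sum>a<d. \<Sum>b<d. ?v a * W $$ (a,b) * ?v b) = (\<Sum>a<d. \<Sum>b<d. W $$ (a,b) * ee k k a b)"
    by (intro sum.cong refl) (simp add: ee_def)
  also have "\<dots> = W $$ (k,k)" using double_delta[OF assms(2) assms(2)] .
  finally show ?thesis .
qed

lemma coord_bound:
  assumes S: "pd_mat d S" and SW: "S * W = 1\<^sub>m d" and W: "W \<in> carrier_mat d d" and pdW: "pd_mat d W"
    and k: "k < d" and v: "v \<in> carrier_vec d"
  shows "(v $ k)\<^sup>2 \<le> W $$ (k,k) * (v \<bullet> (S *\<^sub>v v))"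
proof -
  have Sc: "S \<in> carrier_mat d d" using S by (rule pd_mat_carrier)
  define f where "f a = v $ a" for a
  define w where "w a = W $$ (a,k)" for a
  define Q where "Q x = (\<Sum>a<d. \<Sum>b<d. x a * S $$ (a,b) * x b)" for x
  have psd: "0 \<le> Q x" for x unfolding Q_def using pdf_psd[OF pd_mat_pdf[OF S]] by simp
  have Sw: "(\<Sum>b<d. S $$ (a,b) * w b) = (if a = k then 1 else 0)" if a: "a < d" for a
  proof -
    have "(S * W) $$ (a,k) = (\<Sum>b<d. S $$ (a,b) * W $$ (b,k))" by (rule mult_entry[OF Sc W a k])
    then show ?thesis using SW a k unfolding w_def by simp
  qed
  have sym: "S $$ (a,b) = S $$ (b,a)" if "a < d" "b < d" for a b using pd_mat_sym_entry[OF S that] .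
  have t2: "(\<Sum>a<d. \<Sum>b<d. x a * S $$ (a,b) * w b) = x k" for x
  proof -
    have "(\<Sum>a<d. \<Sum>b<d. x a * S $$ (a,b) * w b) = (\<Sum>a<d. x a * (\<Sum>b<d. S $$ (a,b) * w b))"
      by (simp add: sum_distrib_left mult.assoc)
    also have "\<dots> = (\<Sum>a<d. if a = k then x a else 0)" by (intro sum.cong refl) (simp add: Sw)
    finally show ?thesis using k by simp
  qed
  have t3: "(\<Sum>a<d. \<Sum>b<d. w a * S $$ (a,b) * x b) = x k" for x
  proof -
    have "(\<Sum>a<d. \<Sum>b<d. w a * S $$ (a,b) * x b) = (\<Sum>a<d. \<Sum>b<d. x b * S $$ (b,a) * w a)"
      by (intro sum.cong refl) (simp add: sym mult.commute mult.left_commute)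
    also have "\<dots> = (\<Sum>b<d. \<Sum>a<d. x b * S $$ (b,a) * w a)" by (rule sum.swap)
    finally show ?thesis using t2 by simp
  qed
  have expand: "Q (\<lambda>a. f a - \<mu> * w a) = Q f - 2 * \<mu> * f k + \<mu>\<^sup>2 * W $$ (k,k)" for \<mu>
  proof -
    have "Q (\<lambda>a. f a - \<mu> * w a) = Q f - \<mu> * (\<Sum>a<d. \<Sum>b<d. f a * S $$ (a,b) * w b)
        - \<mu> * (\<Sum>a<d. \<Sum>b<d. w a * S $$ (a,b) * f b) + \<mu>\<^sup>2 * (\<Sum>a<d. \<Sum>b<d. w a * S $$ (a,b) * w b)"
    proof -
      have pw: "(f a - \<mu> * w a) * S $$ (a,b) * (f b - \<mu> * w b) = f a * S $$ (a,b) * f b - \<mu> * (f a * S $$ (a,b) * w b)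
        - \<mu> * (w a * S $$ (a,b) * f b) + \<mu>\<^sup>2 * (w a * S $$ (a,b) * w b)" for a b
        by (simp add: power2_eq_square algebra_simps)
      show ?thesis unfolding Q_def pw by (simp only: sum.distrib sum_subtractf sum_distrib_left)
    qed
    then show ?thesis using t2 t3 unfolding w_def by simp
  qed
  have Wkk: "0 < W $$ (k,k)" by (rule pd_diag_pos[OF pdW k])
  have "0 \<le> Q f - 2 * (f k / W $$ (k,k)) * f k + (f k / W $$ (k,k))\<^sup>2 * W $$ (k,k)"
    using psd expand by metis
  also have "\<dots> = Q f - (f k)\<^sup>2 / W $$ (k,k)" using Wkk by (simp add: field_simps power2_eq_square)
  finally have "(f k)\<^sup>2 / W $$ (k,k) \<le> Q f" by simp
  then have "(f k)\<^sup>2 \<le> W $$ (k,k) * Q f" using Wkk by (simp add: field_simps)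
  moreover have "Q f = v \<bullet> (S *\<^sub>v v)" unfolding Q_def f_def using quad_form[OF Sc v] by simp
  ultimately show ?thesis unfolding f_def by simp
qed

lemma two_ab_le: "2 * \<bar>a * b\<bar> \<le> a\<^sup>2 + (b::real)\<^sup>2"
proof -
  have "0 \<le> (\<bar>a\<bar> - \<bar>b\<bar>)\<^sup>2" by simp
  also have "(\<bar>a\<bar> - \<bar>b\<bar>)\<^sup>2 = a\<^sup>2 + b\<^sup>2 - 2 * \<bar>a * b\<bar>" by (simp add: power2_eq_square algebra_simps abs_mult)
  finally show ?thesis by simp
qed

lemma pd_pert:
  assumes S: "pd_mat d S" and SW: "S * W = 1\<^sub>m d" and W: "W \<in> carrier_mat d d" and pdW: "pd_mat d W"
    and ij: "i < d" "j < d" and t: "\<bar>t\<bar> * (W $$ (i,i) + W $$ (j,j)) < 1"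
  shows "pd_mat d (pert d S i j t)"
proof -
  have Sc: "S \<in> carrier_mat d d" using S by (rule pd_mat_carrier)
  have symS: "sym_mat d S" using S unfolding pd_mat_def by auto
  show ?thesis unfolding pd_mat_def
  proof (intro conjI sym_pert[OF symS] ballI impI)
    fix v :: "real vec" assume v: "v \<in> carrier_vec d" "v \<noteq> 0\<^sub>v d"
    define Q where "Q = v \<bullet> (S *\<^sub>v v)"
    define X where "X = (if i = j then (v $ i)\<^sup>2 else 2 * (v $ i * v $ j))"
    have Q: "0 < Q" unfolding Q_def using S v unfolding pd_mat_def by auto
    have eq: "v \<bullet> (pert d S i j t *\<^sub>v v) = Q + t * X" unfolding Q_def X_def by (rule quad_pert[OF Sc v(1) ij])
    have X: "\<bar>X\<bar> \<le> (v $ i)\<^sup>2 + (v $ j)\<^sup>2"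
      unfolding X_def using two_ab_le[of "v $ i" "v $ j"] by (auto simp: abs_mult)
    have bi: "(v $ i)\<^sup>2 \<le> W $$ (i,i) * Q" unfolding Q_def by (rule coord_bound[OF S SW W pdW ij(1) v(1)])
    have bj: "(v $ j)\<^sup>2 \<le> W $$ (j,j) * Q" unfolding Q_def by (rule coord_bound[OF S SW W pdW ij(2) v(1)])
    have "\<bar>t * X\<bar> \<le> \<bar>t\<bar> * ((W $$ (i,i) + W $$ (j,j)) * Q)"
    proof -
      have "\<bar>t * X\<bar> = \<bar>t\<bar> * \<bar>X\<bar>" by (simp add: abs_mult)
      also have "\<dots> \<le> \<bar>t\<bar> * ((W $$ (i,i) + W $$ (j,j)) * Q)"
        by (rule mult_left_mono) (use X bi bj in \<open>auto simp: algebra_simps\<close>)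
      finally show ?thesis .
    qed
    also have "\<dots> = (\<bar>t\<bar> * (W $$ (i,i) + W $$ (j,j))) * Q" by simp
    also have "\<dots> < 1 * Q" by (rule mult_strict_right_mono[OF t Q])
    finally have "\<bar>t * X\<bar> < Q" by simp
    then show "0 < v \<bullet> (pert d S i j t *\<^sub>v v)" unfolding eq by linarith
  qed
qed

lemma abs_add_sgn: "\<bar>t\<bar> < \<bar>s\<bar> \<Longrightarrow> \<bar>s + t\<bar> - \<bar>s\<bar> = t * sgn (s::real)"
  by (cases "s > 0") (auto simp: sgn_if abs_if)

lemma kkt:
  assumes opt: "glasso_opt d \<Sigma> lam S" and Sig: "\<Sigma> \<in> carrier_mat d d"
    and Sigsym: "\<And>a b. a < d \<Longrightarrow> b < d \<Longrightarrow> \<Sigma> $$ (a,b) = \<Sigma> $$ (b,a)"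
    and SW: "S * W = 1\<^sub>m d" and W: "W \<in> carrier_mat d d" and pdW: "pd_mat d W"
    and ij: "i < d" "j < d" and nz: "i \<noteq> j \<Longrightarrow> S $$ (i,j) \<noteq> 0"
  shows "if i = j then W $$ (i,i) = \<Sigma> $$ (i,i) else W $$ (i,j) = \<Sigma> $$ (i,j) + lam * sgn (S $$ (i,j))"
proof -
  have S: "pd_mat d S" using opt unfolding glasso_opt_def by auto
  have Sc: "S \<in> carrier_mat d d" using S by (rule pd_mat_carrier)
  have symS: "S $$ (j,i) = S $$ (i,j)" using pd_mat_sym_entry[OF S ij(2,1)] .
  have symW: "W $$ (j,i) = W $$ (i,j)" using pd_mat_sym_entry[OF pdW ij(2,1)] .
  define ds where "ds = det S"
  have ds: "0 < ds" unfolding ds_def using logdet_ineq(1)[OF S] .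
  obtain g where g: "isCont g 0" "g 0 = (if i = j then cofactor S i i else cofactor S i j + cofactor S j i)"
    "\<And>t. det (pert d S i j t) = det S + t * g t" using det_pert[OF Sc ij] by blast
  define wv where "wv = (if i = j then W $$ (i,i) else 2 * W $$ (i,j))"
  have g0: "g 0 = ds * wv"
    unfolding g(2) wv_def ds_def using cofactor_inv[OF Sc SW W] ij symW by (auto simp: algebra_simps)
  define c1 where "c1 = (if i = j then \<Sigma> $$ (i,i) else 2 * \<Sigma> $$ (i,j))"
  define c2 where "c2 = (if i = j then 0 else 2 * sgn (S $$ (i,j)))"
  define h where "h t = ln (ds + t * g t)" for t
  define F where "F t = - h t + mtrace (\<Sigma> * S) + t * c1 + lam * (pen d S + t * c2)" for t
  define \<delta> where "\<delta> = min (1 / (W $$ (i,i) + W $$ (j,j) + 1)) (if i = j then 1 else \<bar>S $$ (i,j)\<bar>)"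
  have Wii: "0 < W $$ (i,i)" and Wjj: "0 < W $$ (j,j)" using pd_diag_pos[OF pdW] ij by auto
  have \<delta>: "0 < \<delta>" unfolding \<delta>_def using Wii Wjj nz by auto
  have F0: "F 0 = glasso_obj d \<Sigma> lam S" unfolding F_def h_def glasso_obj_pen ds_def by simp
  have Ft: "F t = glasso_obj d \<Sigma> lam (pert d S i j t)" and pdt: "pd_mat d (pert d S i j t)"
    if t: "\<bar>t\<bar> < \<delta>" for t
  proof -
    have t1: "\<bar>t\<bar> * (W $$ (i,i) + W $$ (j,j)) < 1"
    proof -
      have "\<bar>t\<bar> < 1 / (W $$ (i,i) + W $$ (j,j) + 1)" using t unfolding \<delta>_def by auto
      then have "\<bar>t\<bar> * (W $$ (i,i) + W $$ (j,j) + 1) < 1" using Wii Wjj by (simp add: field_simps)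
      moreover have "\<bar>t\<bar> * (W $$ (i,i) + W $$ (j,j)) \<le> \<bar>t\<bar> * (W $$ (i,i) + W $$ (j,j) + 1)"
        by (rule mult_left_mono) auto
      ultimately show ?thesis by linarith
    qed
    show "pd_mat d (pert d S i j t)" by (rule pd_pert[OF S SW W pdW ij t1])
    have tr: "mtrace (\<Sigma> * pert d S i j t) = mtrace (\<Sigma> * S) + t * c1"
      unfolding trace_pert[OF Sig Sc ij] c1_def using Sigsym[OF ij(2,1)] by auto
    have pn: "pen d (pert d S i j t) = pen d S + t * c2"
    proof (cases "i = j")
      case True
      then show ?thesis unfolding c2_def using pen_pert_diag[OF ij(1)] by simp
    next
      case False
      have "\<bar>t\<bar> < \<bar>S $$ (i,j)\<bar>" using t False unfolding \<delta>_def by auto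
      then show ?thesis unfolding c2_def pen_pert_off[OF ij False symS] using False abs_add_sgn by simp
    qed
    show "F t = glasso_obj d \<Sigma> lam (pert d S i j t)"
      unfolding glasso_obj_pen F_def h_def g(3) tr pn ds_def by simp
  qed
  have min: "\<forall>y. \<bar>0 - y\<bar> < \<delta> \<longrightarrow> F 0 \<le> F y"
  proof (intro allI impI)
    fix y :: real assume "\<bar>0 - y\<bar> < \<delta>"
    then have y: "\<bar>y\<bar> < \<delta>" by simp
    show "F 0 \<le> F y" unfolding F0 Ft[OF y] using opt pdt[OF y] unfolding glasso_opt_def by blast
  qed
  have Dlin: "((\<lambda>t. ds + t * g t) has_real_derivative g 0) (at 0)"
    unfolding CARAT_DERIV by (intro exI[of _ g]) (use g(1) in auto)
  have Dh: "(h has_real_derivative (1 / ds * g 0)) (at 0)"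
  proof -
    have "(ln has_real_derivative (1 / ds)) (at ((\<lambda>t. ds + t * g t) 0))" using DERIV_ln_divide[OF ds] by simp
    from DERIV_chain2[OF this Dlin] show ?thesis unfolding h_def by simp
  qed
  have DF: "(F has_real_derivative (- (1 / ds * g 0) + c1 + lam * c2)) (at 0)"
    unfolding F_def[abs_def] by (rule derivative_eq_intros Dh refl | simp)+
  have "- (1 / ds * g 0) + c1 + lam * c2 = 0" by (rule DERIV_local_min[OF DF \<delta> min])
  then have "wv = c1 + lam * c2" unfolding g0 using ds by simp
  then show ?thesis unfolding wv_def c1_def c2_def by (cases "i = j") auto
qed

lemma mtrace_mult:
  assumes A: "A \<in> carrier_mat d d" and B: "B \<in> carrier_mat d d"
  shows "mtrace (A * B) = (\<Sum>a<d. \<Sum>k<d. A $$ (a,k) * B $$ (k,a))"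
proof -
  have "mtrace (A * B) = (\<Sum>a<d. (A * B) $$ (a,a))" unfolding mtrace_def using A by simp
  also have "\<dots> = (\<Sum>a<d. \<Sum>k<d. A $$ (a,k) * B $$ (k,a))"
    by (intro sum.cong refl mult_entry[OF A B]) auto
  finally show ?thesis .
qed

lemma mtrace_comm:
  assumes A: "A \<in> carrier_mat d d" and B: "B \<in> carrier_mat d d"
  shows "mtrace (A * B) = mtrace (B * A)"
  unfolding mtrace_mult[OF A B] mtrace_mult[OF B A]
  by (subst sum.swap) (simp add: mult.commute)

lemma dg_mult: "dg n D * dg n E = dg n (\<lambda>k. D k * E k)"
proof (rule eq_matI)
  fix a b assume "a < dim_row (dg n (\<lambda>k. D k * E k))" "b < dim_col (dg n (\<lambda>k. D k * E k))"
  then have ab: "a < n" "b < n" by (auto simp: dg_def)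
  have "(dg n D * dg n E) $$ (a,b) = (\<Sum>k<n. dg n D $$ (a,k) * dg n E $$ (k,b))"
    by (rule mult_entry[OF dg_carrier dg_carrier ab])
  also have "\<dots> = (\<Sum>k<n. if k = a then (if a = b then D a * E a else 0) else 0)"
    by (intro sum.cong refl) (use ab in \<open>auto simp: dg_def\<close>)
  also have "\<dots> = dg n (\<lambda>k. D k * E k) $$ (a,b)" using ab by (simp add: dg_def)
  finally show "(dg n D * dg n E) $$ (a,b) = dg n (\<lambda>k. D k * E k) $$ (a,b)" .
qed (auto simp: dg_def)

lemma dg_transpose: "(dg n D)\<^sup>T = dg n D"
  by (rule eq_matI) (auto simp: dg_def)

lemma maxdet_unique:
  assumes S: "pd_mat d S" and SW: "S * W = 1\<^sub>m d" and WS: "W * S = 1\<^sub>m d" and W: "W \<in> carrier_mat d d"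
    and pdW: "pd_mat d W"
    and WC: "\<forall>(a,b)\<in>E. W $$ (a,b) = C $$ (a,b)"
    and supp: "\<And>a b. a < d \<Longrightarrow> b < d \<Longrightarrow> S $$ (a,b) \<noteq> 0 \<Longrightarrow> (b,a) \<in> E"
  shows "unique_maxdet_completion d E C W"
  unfolding unique_maxdet_completion_def
proof (intro conjI allI impI)
  show "maxdet_feasible d E C W" unfolding maxdet_feasible_def using pdW WC by blast
  fix Y assume Yf: "maxdet_feasible d E C Y" and YW: "Y \<noteq> W"
  have Y: "pd_mat d Y" and YC: "\<forall>(a,b)\<in>E. Y $$ (a,b) = C $$ (a,b)" using Yf unfolding maxdet_feasible_def by auto
  have Yc: "Y \<in> carrier_mat d d" using Y by (rule pd_mat_carrier)
  have YT: "Y\<^sup>T = Y" using Y unfolding pd_mat_def sym_mat_def by auto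
  have Sc: "S \<in> carrier_mat d d" using S by (rule pd_mat_carrier)
  from ldl_mat[OF S] obtain L D where LD: "L \<in> carrier_mat d d" "\<forall>a<d. L $$ (a,a) = 1"
    "\<forall>a b. a < b \<longrightarrow> b < d \<longrightarrow> L $$ (a,b) = 0" "\<forall>a<d. 0 < D a" "S = L * dg d D * L\<^sup>T" by blast
  define Dh where "Dh = dg d (\<lambda>k. sqrt (D k))"
  have Dhc: "Dh \<in> carrier_mat d d" unfolding Dh_def by simp
  have DhDh: "Dh * Dh = dg d D"
  proof -
    have "Dh * Dh = dg d (\<lambda>k. sqrt (D k) * sqrt (D k))" unfolding Dh_def dg_mult ..
    also have "\<dots> = dg d D" unfolding dg_def using LD(4) by (intro eq_matI) auto
    finally show ?thesis .
  qed
  define R where "R = L * Dh"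
  have Rc: "R \<in> carrier_mat d d" unfolding R_def using LD(1) Dhc by simp
  have DhT: "Dh\<^sup>T = Dh" unfolding Dh_def by (rule dg_transpose)
  have RT: "R\<^sup>T = Dh * L\<^sup>T" unfolding R_def using transpose_mult[OF LD(1) Dhc] DhT by simp
  have LTc: "L\<^sup>T \<in> carrier_mat d d" using LD(1) by simp
  have RTc: "R\<^sup>T \<in> carrier_mat d d" using Rc by simp
  have RRT: "R * R\<^sup>T = S"
  proof -
    have "R * R\<^sup>T = R * (Dh * L\<^sup>T)" using RT by simp
    also have "\<dots> = L * Dh * (Dh * L\<^sup>T)" unfolding R_def ..
    also have "\<dots> = L * (Dh * Dh) * L\<^sup>T" using LD(1) Dhc LTc by (simp add: assoc_mult_mat[of _ d d _ d _ d])
    also have "\<dots> = S" unfolding DhDh LD(5) ..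
    finally show ?thesis .
  qed
  have detR: "det R \<noteq> 0"
  proof -
    have "det R = det L * det Dh" unfolding R_def by (rule det_mult[OF LD(1) Dhc])
    also have "\<dots> = (\<Prod>k<d. sqrt (D k))" unfolding Dh_def det_dg det_unit_lower[OF LD(1-3)] by simp
    finally show ?thesis using LD(4) by (simp add: less_imp_neq[symmetric])
  qed
  define M where "M = R\<^sup>T * Y * R"
  have Mc: "M \<in> carrier_mat d d" unfolding M_def using RTc Yc Rc by simp
  have pdM: "pd_mat d M"
    unfolding pd_mat_def sym_mat_def
  proof (intro conjI Mc ballI impI)
    show "M\<^sup>T = M"
    proof -
      have "M\<^sup>T = R\<^sup>T * (R\<^sup>T * Y)\<^sup>T" unfolding M_def by (rule transpose_mult[of _ d d]) (use RTc Yc Rc in auto)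
      also have "(R\<^sup>T * Y)\<^sup>T = Y\<^sup>T * R" using transpose_mult[OF RTc Yc] by simp
      also have "R\<^sup>T * (Y\<^sup>T * R) = M" unfolding YT M_def using RTc Yc Rc by (simp add: assoc_mult_mat[of _ d d _ d _ d])
      finally show ?thesis .
    qed
    fix v :: "real vec" assume v: "v \<in> carrier_vec d" "v \<noteq> 0\<^sub>v d"
    define u where "u = R *\<^sub>v v"
    have u: "u \<in> carrier_vec d" unfolding u_def using Rc v by simp
    have "u \<noteq> 0\<^sub>v d"
    proof
      assume "u = 0\<^sub>v d"
      then have "det R = 0" using det_0_iff_vec_prod_zero[OF Rc] v unfolding u_def by blast
      then show False using detR by simp
    qed
    then have pos: "0 < u \<bullet> (Y *\<^sub>v u)" using Y u unfolding pd_mat_def by auto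
    have "M = R\<^sup>T * (Y * R)" unfolding M_def using RTc Yc Rc by (simp add: assoc_mult_mat[of _ d d _ d _ d])
    then have "M *\<^sub>v v = R\<^sup>T *\<^sub>v ((Y * R) *\<^sub>v v)" using RTc Yc Rc v assoc_mult_mat_vec[of "R\<^sup>T" d d "Y * R" d v] by simp
    also have "(Y * R) *\<^sub>v v = Y *\<^sub>v u" unfolding u_def using Yc Rc v assoc_mult_mat_vec[of Y d d R d v] by simp
    finally have "M *\<^sub>v v = R\<^sup>T *\<^sub>v (Y *\<^sub>v u)" .
    then have "v \<bullet> (M *\<^sub>v v) = v \<bullet> (R\<^sup>T *\<^sub>v (Y *\<^sub>v u))" by simp
    also have "\<dots> = (R\<^sup>T *\<^sub>v (Y *\<^sub>v u)) \<bullet> v" by (rule comm_scalar_prod[of _ d]) (use v Rc Yc u in auto)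
    also have "\<dots> = (Y *\<^sub>v u) \<bullet> u" unfolding u_def by (rule transpose_vec_mult_scalar[OF Rc v(1)]) (use Yc u u_def in auto)
    also have "\<dots> = u \<bullet> (Y *\<^sub>v u)" by (rule comm_scalar_prod[of _ d]) (use Yc u in auto)
    finally show "0 < v \<bullet> (M *\<^sub>v v)" using pos by simp
  qed
  have detS: "det S = det R * det R"
    using RRT det_mult[OF Rc RTc] det_transpose[OF Rc] by simp
  have detM: "det M = det Y * (det R * det R)"
  proof -
    have "det M = det (R\<^sup>T * Y) * det R" unfolding M_def by (rule det_mult[of _ d]) (use RTc Yc Rc in auto)
    also have "\<dots> = det R * det Y * det R" using det_mult[OF RTc Yc] det_transpose[OF Rc] by simp
    finally show ?thesis by simp
  qed
  have trM: "mtrace M = real d"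
  proof -
    have "mtrace M = mtrace ((R\<^sup>T * Y) * R)" unfolding M_def ..
    also have "\<dots> = mtrace (R * (R\<^sup>T * Y))" by (rule mtrace_comm) (use RTc Yc Rc in auto)
    also have "R * (R\<^sup>T * Y) = S * Y" unfolding RRT[symmetric] using Rc RTc Yc by (simp add: assoc_mult_mat[of _ d d _ d _ d])
    also have "mtrace (S * Y) = (\<Sum>a<d. \<Sum>k<d. S $$ (a,k) * Y $$ (k,a))" by (rule mtrace_mult[OF Sc Yc])
    also have "\<dots> = (\<Sum>a<d. \<Sum>k<d. S $$ (a,k) * W $$ (k,a))"
    proof (intro sum.cong refl)
      fix a k assume "a \<in> {..<d}" "k \<in> {..<d}"
      then show "S $$ (a,k) * Y $$ (k,a) = S $$ (a,k) * W $$ (k,a)"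
        using supp[of a k] WC YC by (cases "S $$ (a,k) = 0") auto
    qed
    also have "\<dots> = mtrace (S * W)" by (rule mtrace_mult[OF Sc W, symmetric])
    also have "\<dots> = real d" unfolding SW mtrace_def by simp
    finally show ?thesis .
  qed
  have dS: "0 < det S" using logdet_ineq(1)[OF S] .
  have dY: "0 < det Y" using logdet_ineq(1)[OF Y] .
  have dW: "det W = 1 / det S"
  proof -
    have "det S * det W = 1" using det_mult[OF Sc W] SW by simp
    then show ?thesis using dS by (simp add: field_simps)
  qed
  have lnM: "ln (det M) = ln (det Y) + ln (det S)" unfolding detM detS[symmetric] using dS dY by (simp add: ln_mult)
  have lnW: "ln (det W) = - ln (det S)" unfolding dW using dS by (simp add: ln_div)
  show "ln (det Y) < ln (det W)"
  proof (rule ccontr)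
    assume "\<not> ?thesis"
    then have ge: "0 \<le> ln (det M)" unfolding lnM lnW by simp
    have "ln (det M) \<le> mtrace M - real d" by (rule logdet_ineq(2)[OF pdM])
    then have "ln (det M) = mtrace M - real d" using ge trM by simp
    then have M1: "M = 1\<^sub>m d" by (rule logdet_ineq(3)[OF pdM])
    have "S * Y * S = S"
    proof -
      have "R * M * R\<^sup>T = R * R\<^sup>T" unfolding M1 using Rc by simp
      moreover have "R * M * R\<^sup>T = (R * R\<^sup>T) * Y * (R * R\<^sup>T)"
        unfolding M_def using Rc RTc Yc by (simp add: assoc_mult_mat[of _ d d _ d _ d])
      ultimately show ?thesis unfolding RRT by simp
    qed
    then have "W * (S * Y * S) * W = W * S * W" by simp
    moreover have "W * (S * Y * S) * W = (W * S) * Y * (S * W)"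
      using W Sc Yc by (simp add: assoc_mult_mat[of _ d d _ d _ d])
    moreover have "W * S * W = W" using WS W by simp
    ultimately have "Y = W" using WS SW Yc by simp
    then show False using YW by simp
  qed
qed

lemma pdf_pos: "pdf n A \<Longrightarrow> \<exists>a<n. v a \<noteq> 0 \<Longrightarrow> 0 < (\<Sum>a<n. \<Sum>b<n. v a * A a b * v b)"
  unfolding pdf_def by blast

lemma offdiag_lt1:
  assumes W: "pd_mat d W" and ab: "a < d" "b < d" "a \<noteq> b" and Wa: "W $$ (a,a) = 1" and Wb: "W $$ (b,b) = 1"
  shows "\<bar>W $$ (a,b)\<bar> < 1"
proof -
  define \<mu> where "\<mu> = - W $$ (a,b)"
  let ?v = "\<lambda>x. (if x = a then 1 else 0) + \<mu> * (if x = b then 1 else (0::real))"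
  have "?v a = 1" using ab(3) by simp
  then have "\<exists>x<d. ?v x \<noteq> 0" by (intro exI[of _ a] conjI ab(1)) linarith
  then have "0 < (\<Sum>x<d. \<Sum>y<d. ?v x * W $$ (x,y) * ?v y)"
    by (rule pdf_pos[OF pd_mat_pdf[OF W]])
  also have "(\<Sum>x<d. \<Sum>y<d. ?v x * W $$ (x,y) * ?v y) = (\<Sum>x<d. \<Sum>y<d. W $$ (x,y) * ee a a x y)
      + \<mu> * (\<Sum>x<d. \<Sum>y<d. W $$ (x,y) * ee a b x y) + \<mu> * (\<Sum>x<d. \<Sum>y<d. W $$ (x,y) * ee b a x y)
      + \<mu>\<^sup>2 * (\<Sum>x<d. \<Sum>y<d. W $$ (x,y) * ee b b x y)"
  proof -
    have pw: "?v x * W $$ (x,y) * ?v y = W $$ (x,y) * ee a a x y + \<mu> * (W $$ (x,y) * ee a b x y)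
       + \<mu> * (W $$ (x,y) * ee b a x y) + \<mu>\<^sup>2 * (W $$ (x,y) * ee b b x y)" for x y
      using ab(3) by (cases "x = a"; cases "x = b"; cases "y = a"; cases "y = b") (simp_all add: ee_def power2_eq_square)
    show ?thesis unfolding pw by (simp only: sum.distrib sum_distrib_left)
  qed
  also have "\<dots> = W $$ (a,a) + \<mu> * W $$ (a,b) + \<mu> * W $$ (b,a) + \<mu>\<^sup>2 * W $$ (b,b)"
    using double_delta[OF ab(1) ab(1)] double_delta[OF ab(1) ab(2)] double_delta[OF ab(2) ab(1)] double_delta[OF ab(2) ab(2)]
    by simp
  also have "\<dots> = 1 - (W $$ (a,b))\<^sup>2" unfolding \<mu>_def using Wa Wb pd_mat_sym_entry[OF W ab(2,1)]
    by (simp add: power2_eq_square)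
  finally have "(W $$ (a,b))\<^sup>2 < 1" by simp
  then show ?thesis by (simp add: abs_square_less_1)
qed

lemma sign_flip:
  assumes "\<bar>s\<bar> > lam" "lam \<ge> 1/2" "x \<noteq> 0" "\<bar>s + lam * sgn x\<bar> < (1::real)"
  shows "s + lam * sgn x = s - lam * sgn s"
proof (cases "x > 0")
  case True
  then have "sgn x = 1" by simp
  then show ?thesis using assms by (cases "s > 0") (auto simp: sgn_if abs_if split: if_splits)
next
  case False
  then have "sgn x = -1" using assms(3) by simp
  then show ?thesis using assms by (cases "s > 0") (auto simp: sgn_if abs_if split: if_splits)
qed

lemma W_props:
  assumes sc: "sample_corr d \<Sigma>" and lam: "lam > 0" and opt: "glasso_opt d \<Sigma> lam S"
    and supp: "\<forall>i<d. \<forall>j<d. i \<noteq> j \<longrightarrow> (S $$ (i,j) \<noteq> 0 \<longleftrightarrow> \<bar>\<Sigma> $$ (i,j)\<bar> > lam)"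
    and lam2: "lam \<ge> 1/2"
    and SW: "S * W = 1\<^sub>m d" and W: "W \<in> carrier_mat d d" and pdW: "pd_mat d W"
  shows "\<forall>a<d. W $$ (a,a) = 1"
    and "\<forall>a b. thr_adj d \<Sigma> lam a b \<longrightarrow> W $$ (a,b) = \<Sigma> $$ (a,b) - lam * sgn (\<Sigma> $$ (a,b))"
proof -
  have Sig: "\<Sigma> \<in> carrier_mat d d" "\<Sigma>\<^sup>T = \<Sigma>" using sc unfolding sample_corr_def psd_mat_def sym_mat_def by auto
  have Sigsym: "\<Sigma> $$ (a,b) = \<Sigma> $$ (b,a)" if "a < d" "b < d" for a b
  proof -
    have "\<Sigma>\<^sup>T $$ (b,a) = \<Sigma> $$ (a,b)" using Sig(1) that by simp
    then show ?thesis using Sig(2) by simp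
  qed
  have diag1: "\<Sigma> $$ (a,a) = 1" if "a < d" for a using sc that unfolding sample_corr_def by auto
  show W1: "\<forall>a<d. W $$ (a,a) = 1"
  proof (intro allI impI)
    fix a assume a: "a < d"
    have "W $$ (a,a) = \<Sigma> $$ (a,a)" using kkt[OF opt Sig(1) Sigsym SW W pdW a a] by simp
    then show "W $$ (a,a) = 1" using diag1[OF a] by simp
  qed
  show "\<forall>a b. thr_adj d \<Sigma> lam a b \<longrightarrow> W $$ (a,b) = \<Sigma> $$ (a,b) - lam * sgn (\<Sigma> $$ (a,b))"
  proof (intro allI impI)
    fix a b assume "thr_adj d \<Sigma> lam a b"
    then have ab: "a < d" "b < d" "a \<noteq> b" and big: "\<bar>\<Sigma> $$ (a,b)\<bar> > lam" unfolding thr_adj_def by auto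
    have nz: "S $$ (a,b) \<noteq> 0" using supp ab big by blast
    have Wab: "W $$ (a,b) = \<Sigma> $$ (a,b) + lam * sgn (S $$ (a,b))"
      using kkt[OF opt Sig(1) Sigsym SW W pdW ab(1,2)] nz ab(3) by simp
    have "\<bar>W $$ (a,b)\<bar> < 1" using offdiag_lt1[OF pdW ab] W1 ab by simp
    then show "W $$ (a,b) = \<Sigma> $$ (a,b) - lam * sgn (\<Sigma> $$ (a,b))"
      unfolding Wab using sign_flip[OF big lam2 nz] by simp
  qed
qed

lemma part1:
  assumes sc: "sample_corr d \<Sigma>" and lam: "lam > 0" and opt: "glasso_opt d \<Sigma> lam S"
    and supp: "\<forall>i<d. \<forall>j<d. i \<noteq> j \<longrightarrow> (S $$ (i,j) \<noteq> 0 \<longleftrightarrow> \<bar>\<Sigma> $$ (i,j)\<bar> > lam)"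
    and lam2: "lam \<ge> 1/2"
    and SW: "S * W = 1\<^sub>m d" and WS: "W * S = 1\<^sub>m d" and W: "W \<in> carrier_mat d d" and pdW: "pd_mat d W"
  shows "unique_maxdet_completion d (pattern d \<Sigma> lam) (Cpart d \<Sigma> lam) W"
proof -
  have S: "pd_mat d S" using opt unfolding glasso_opt_def by auto
  note WP = W_props[OF sc lam opt supp lam2 SW W pdW]
  have Sig: "\<Sigma> \<in> carrier_mat d d" "\<Sigma>\<^sup>T = \<Sigma>" using sc unfolding sample_corr_def psd_mat_def sym_mat_def by auto
  have Sigsym: "\<Sigma> $$ (a,b) = \<Sigma> $$ (b,a)" if "a < d" "b < d" for a b
  proof -
    have "\<Sigma>\<^sup>T $$ (b,a) = \<Sigma> $$ (a,b)" using Sig(1) that by simp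
    then show ?thesis using Sig(2) by simp
  qed
  show ?thesis
  proof (rule maxdet_unique[OF S SW WS W pdW])
    show "\<forall>(a,b)\<in>pattern d \<Sigma> lam. W $$ (a,b) = Cpart d \<Sigma> lam $$ (a,b)"
    proof (intro ballI, clarify)
      fix a b assume "(a,b) \<in> pattern d \<Sigma> lam"
      then consider "a = b" "a < d" | "thr_adj d \<Sigma> lam a b" unfolding pattern_def by auto
      then show "W $$ (a,b) = Cpart d \<Sigma> lam $$ (a,b)"
      proof cases
        case 1 then show ?thesis using WP(1) by (simp add: Cpart_def)
      next
        case 2
        then have "a < d" "b < d" "a \<noteq> b" unfolding thr_adj_def by auto
        then show ?thesis using WP(2) 2 by (simp add: Cpart_def)
      qed
    qed
  next
    fix a b assume ab: "a < d" "b < d" "S $$ (a,b) \<noteq> 0"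
    show "(b,a) \<in> pattern d \<Sigma> lam"
    proof (cases "a = b")
      case True then show ?thesis using ab unfolding pattern_def by auto
    next
      case False
      then have "\<bar>\<Sigma> $$ (a,b)\<bar> > lam" using supp ab by blast
      then have "thr_adj d \<Sigma> lam b a" unfolding thr_adj_def using ab False Sigsym[OF ab(1,2)] by auto
      then show ?thesis unfolding pattern_def by auto
    qed
  qed
qed

lemma card_less_idx:
  fixes I :: "nat set"
  assumes "finite I" "i \<in> I" shows "card {a\<in>I. a < i} < card I"
proof (rule psubset_card_mono[OF assms(1)])
  have "i \<notin> {a\<in>I. a < i}" by simp
  then show "{a\<in>I. a < i} \<subset> I" using assms(2) by blast
qed

lemma pick_bij: "finite I \<Longrightarrow> bij_betw (pick I) {..<card I} I"
proof -
  assume fin: "finite I"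
  have inj: "inj_on (pick I) {..<card I}"
  proof (rule inj_onI)
    fix p q assume p: "p \<in> {..<card I}" and q: "q \<in> {..<card I}" and eq: "pick I p = pick I q"
    show "p = q"
    proof (rule ccontr)
      assume "p \<noteq> q"
      then consider "p < q" | "q < p" by linarith
      then show False
      proof cases
        case 1 then show False using pick_mono[of q I p] q eq by auto
      next
        case 2 then show False using pick_mono[of p I q] p eq by auto
      qed
    qed
  qed
  have img: "pick I ` {..<card I} = I"
  proof
    show "pick I ` {..<card I} \<subseteq> I" using pick_in_set by auto
    show "I \<subseteq> pick I ` {..<card I}"
    proof
      fix m assume m: "m \<in> I"
      then have "m = pick I (card {a\<in>I. a < m})" using pick_card_in_set by simp
      moreover have "card {a\<in>I. a < m} \<in> {..<card I}" using card_less_idx[OF fin m] by simp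
      ultimately show "m \<in> pick I ` {..<card I}" by blast
    qed
  qed
  show ?thesis unfolding bij_betw_def using inj img by blast
qed

lemma pick_reindex: "finite I \<Longrightarrow> (\<Sum>q<card I. f (pick I q)) = (\<Sum>m\<in>I. f m)"
  using sum.reindex_bij_betw[OF pick_bij, of I f] by simp

lemma sum_restrict:
  fixes d :: nat
  assumes "I \<subseteq> {..<d}" "\<And>a. a < d \<Longrightarrow> a \<notin> I \<Longrightarrow> g a = 0"
  shows "(\<Sum>a<d. g a) = (\<Sum>a\<in>I. g a)"
  by (rule sum.mono_neutral_right[of "{..<d}" I]) (use assms in auto)

lemma principal_inj:
  assumes W: "pd_mat d W" and I: "I \<subseteq> {..<d}" and A: "A \<in> carrier_mat (card I) (card I)"
    and Aent: "\<And>p q. p < card I \<Longrightarrow> q < card I \<Longrightarrow> A $$ (p,q) = W $$ (pick I p, pick I q)"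
    and x: "x \<in> carrier_vec (card I)" and Ax: "A *\<^sub>v x = 0\<^sub>v (card I)"
  shows "x = 0\<^sub>v (card I)"
proof (rule ccontr)
  assume nz: "x \<noteq> 0\<^sub>v (card I)"
  have fin: "finite I" using I finite_subset by blast
  define y where "y a = (if a \<in> I then x $ card {b\<in>I. b < a} else 0)" for a
  have ypick: "y (pick I p) = x $ p" if "p < card I" for p
    using pick_in_set[of p I] card_pick[of p I] that unfolding y_def by auto
  obtain p where p: "p < card I" "x $ p \<noteq> 0"
  proof -
    have "\<exists>p<card I. x $ p \<noteq> 0"
    proof (rule ccontr)
      assume "\<not> ?thesis"
      then have "x = 0\<^sub>v (card I)" using x by (intro eq_vecI) auto
      then show False using nz by simp
    qed
    then show ?thesis using that by blast
  qed
  have "\<exists>a<d. y a \<noteq> 0"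
    using pick_in_set[of p I] p ypick I by (intro exI[of _ "pick I p"]) auto
  then have pos: "0 < (\<Sum>a<d. \<Sum>b<d. y a * W $$ (a,b) * y b)" by (rule pdf_pos[OF pd_mat_pdf[OF W]])
  have "(\<Sum>a<d. \<Sum>b<d. y a * W $$ (a,b) * y b) = (\<Sum>a\<in>I. \<Sum>b\<in>I. y a * W $$ (a,b) * y b)"
  proof -
    have "(\<Sum>a<d. \<Sum>b<d. y a * W $$ (a,b) * y b) = (\<Sum>a\<in>I. \<Sum>b<d. y a * W $$ (a,b) * y b)"
      by (rule sum_restrict[OF I]) (simp add: y_def)
    also have "\<dots> = (\<Sum>a\<in>I. \<Sum>b\<in>I. y a * W $$ (a,b) * y b)"
      by (intro sum.cong refl sum_restrict[OF I]) (simp add: y_def)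
    finally show ?thesis .
  qed
  also have "\<dots> = (\<Sum>p<card I. \<Sum>q<card I. y (pick I p) * W $$ (pick I p, pick I q) * y (pick I q))"
  proof -
    define G where "G a b = y a * W $$ (a,b) * y b" for a b
    have "(\<Sum>p<card I. \<Sum>q<card I. G (pick I p) (pick I q)) = (\<Sum>p<card I. \<Sum>b\<in>I. G (pick I p) b)"
      by (rule sum.cong[OF refl], rule pick_reindex[OF fin])
    also have "\<dots> = (\<Sum>a\<in>I. \<Sum>b\<in>I. G a b)" by (rule pick_reindex[OF fin])
    finally show ?thesis unfolding G_def by simp
  qed
  also have "\<dots> = (\<Sum>p<card I. x $ p * (A *\<^sub>v x) $ p)"
  proof (intro sum.cong refl)
    fix p assume p: "p \<in> {..<card I}"
    have "(A *\<^sub>v x) $ p = (\<Sum>q<card I. A $$ (p,q) * x $ q)" using mv_entry[OF A x] p by simp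
    then show "(\<Sum>q<card I. y (pick I p) * W $$ (pick I p, pick I q) * y (pick I q)) = x $ p * (A *\<^sub>v x) $ p"
      using p ypick Aent by (simp add: sum_distrib_left mult.assoc)
  qed
  also have "\<dots> = 0" unfolding Ax by simp
  finally show False using pos by simp
qed

lemma nofill:
  fixes adj :: "nat \<Rightarrow> nat \<Rightarrow> bool"
  assumes L: "L \<in> carrier_mat d d" "\<forall>a<d. L $$ (a,a) = 1" "\<forall>a b. a < b \<longrightarrow> b < d \<longrightarrow> L $$ (a,b) = 0"
    and Dp: "\<forall>a<d. 0 < D a" and SL: "S = L * dg d D * L\<^sup>T"
    and peo: "natural_peo d adj"
    and zero: "\<And>a b. a < d \<Longrightarrow> b < d \<Longrightarrow> a \<noteq> b \<Longrightarrow> \<not> adj a b \<Longrightarrow> S $$ (a,b) = 0"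
  shows "j < i \<Longrightarrow> i < d \<Longrightarrow> \<not> adj i j \<Longrightarrow> L $$ (i,j) = 0"
proof (induction j arbitrary: i rule: less_induct)
  case (less j i)
  have jd: "j < d" using less.prems by simp
  have "S $$ (i,j) = (\<Sum>k<d. L $$ (i,k) * D k * L $$ (j,k))"
    using LDLT_entry[OF L(1) less.prems(2) jd] SL by simp
  also have "\<dots> = (\<Sum>k<d. if k = j then L $$ (i,j) * D j else 0)"
  proof (intro sum.cong refl)
    fix k assume k: "k \<in> {..<d}"
    show "L $$ (i,k) * D k * L $$ (j,k) = (if k = j then L $$ (i,j) * D j else 0)"
    proof (cases "k = j")
      case True then show ?thesis using L(2) jd by simp
    next
      case False
      show ?thesis
      proof (cases "j < k")
        case True then show ?thesis using L(3) k False by simp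
      next
        case jk: False
        then have kj: "k < j" using False by simp
        show ?thesis
        proof (cases "L $$ (i,k) = 0 \<or> L $$ (j,k) = 0")
          case True then show ?thesis using False by auto
        next
          case nz: False
          have ai: "adj i k" using less.IH[OF kj, of i] nz kj less.prems by auto
          have aj: "adj j k" using less.IH[OF kj, of j] nz kj jd by auto
          have "i \<in> higher_nbrs d adj k" "j \<in> higher_nbrs d adj k"
            unfolding higher_nbrs_def using ai aj kj less.prems jd by auto
          moreover have "k < d" using kj jd by simp
          then have "\<forall>a\<in>higher_nbrs d adj k. \<forall>b\<in>higher_nbrs d adj k. a \<noteq> b \<longrightarrow> adj a b"
            using peo unfolding natural_peo_def by blast
          moreover have "i \<noteq> j" using less.prems(1) by simp
          ultimately have "adj i j" by blast
          then show ?thesis using less.prems(3) by simp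
        qed
      qed
    qed
  qed
  also have "\<dots> = L $$ (i,j) * D j" using jd by simp
  finally have "L $$ (i,j) * D j = 0" using zero[OF less.prems(2) jd _ less.prems(3)] less.prems(1) by simp
  moreover have "D j \<noteq> 0" using Dp jd by (metis less_irrefl)
  ultimately show ?case by simp
qed

lemma Xfacts:
  assumes L: "L \<in> carrier_mat d d" "\<forall>a<d. L $$ (a,a) = 1" "\<forall>a b. a < b \<longrightarrow> b < d \<longrightarrow> L $$ (a,b) = 0"
    and Dp: "\<forall>a<d. 0 < D a" and SL: "S = L * dg d D * L\<^sup>T"
    and SW: "S * W = 1\<^sub>m d" and W: "W \<in> carrier_mat d d" and j: "j < d"
  shows "\<And>k. j < k \<Longrightarrow> k < d \<Longrightarrow> (W * L) $$ (k,j) = 0" and "(W * L) $$ (j,j) = 1 / D j"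
proof -
  have LTc: "L\<^sup>T \<in> carrier_mat d d" using L(1) by simp
  have Dc: "dg d D \<in> carrier_mat d d" by simp
  define X where "X = W * L"
  have Xc: "X \<in> carrier_mat d d" unfolding X_def using W L(1) by simp
  define N where "N = L\<^sup>T * X"
  have Nc: "N \<in> carrier_mat d d" unfolding N_def using LTc Xc by simp
  have "det L = 1" by (rule det_unit_lower[OF L])
  then have "L \<in> Units (ring_mat TYPE(real) d ())" using det_non_zero_imp_unit[OF L(1)] by simp
  then have "mat_inverse L \<noteq> None" using mat_inverse(1)[OF L(1), where b="()"] by blast
  then obtain Li where "mat_inverse L = Some Li" by blast
  from mat_inverse(2)[OF L(1) this] have Li: "Li * L = 1\<^sub>m d" "Li \<in> carrier_mat d d" by auto
  have "L * (dg d D * N) = (L * dg d D * L\<^sup>T) * W * L"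
    unfolding N_def X_def using L(1) LTc Dc W by (simp add: assoc_mult_mat[of _ d d _ d _ d] mult_carrier_mat[of _ d d _ d])
  also have "\<dots> = L" unfolding SL[symmetric] SW using L(1) by simp
  finally have LDN: "L * (dg d D * N) = L" .
  have DN: "dg d D * N = 1\<^sub>m d"
  proof -
    have "Li * (L * (dg d D * N)) = (Li * L) * (dg d D * N)"
      using Li(2) L(1) Dc Nc by (simp add: assoc_mult_mat[of _ d d _ d _ d] mult_carrier_mat[of _ d d _ d])
    then show ?thesis unfolding LDN Li(1) using Dc Nc by simp
  qed
  have Nent: "N $$ (a,b) = (if a = b then 1 / D a else 0)" if ab: "a < d" "b < d" for a b
  proof -
    have "(dg d D * N) $$ (a,b) = (\<Sum>k<d. dg d D $$ (a,k) * N $$ (k,b))" by (rule mult_entry[OF Dc Nc ab])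
    also have "\<dots> = (\<Sum>k<d. if k = a then D a * N $$ (a,b) else 0)"
      by (intro sum.cong refl) (use ab in \<open>auto simp: dg_def\<close>)
    also have "\<dots> = D a * N $$ (a,b)" using ab by simp
    finally have "D a * N $$ (a,b) = (if a = b then 1 else 0)" using DN ab by simp
    then show ?thesis using Dp ab by (auto simp: field_simps)
  qed
  have key: "N $$ (k,j) = X $$ (k,j)" if k: "k < d" and hyp: "\<And>m. k < m \<Longrightarrow> m < d \<Longrightarrow> X $$ (m,j) = 0" for k
  proof -
    have "N $$ (k,j) = (\<Sum>m<d. L\<^sup>T $$ (k,m) * X $$ (m,j))" unfolding N_def by (rule mult_entry[OF LTc Xc k j])
    also have "\<dots> = (\<Sum>m<d. if m = k then X $$ (k,j) else 0)"
    proof (intro sum.cong refl)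
      fix m assume m: "m \<in> {..<d}"
      have "L\<^sup>T $$ (k,m) = L $$ (m,k)" using L(1) k m by simp
      moreover have "m < k \<Longrightarrow> L $$ (m,k) = 0" using L(3) k by simp
      moreover have "L $$ (k,k) = 1" using L(2) k by simp
      moreover have "k < m \<Longrightarrow> X $$ (m,j) = 0" using hyp m by simp
      ultimately show "L\<^sup>T $$ (k,m) * X $$ (m,j) = (if m = k then X $$ (k,j) else 0)"
        by (cases "m < k"; cases "m = k") auto
    qed
    also have "\<dots> = X $$ (k,j)" using k by simp
    finally show ?thesis .
  qed
  have Z: "X $$ (k,j) = 0" if "j < k" "k < d" for k
    using that
  proof (induction "d - k" arbitrary: k rule: less_induct)
    case (less k)
    have "\<And>m. k < m \<Longrightarrow> m < d \<Longrightarrow> X $$ (m,j) = 0"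
      using less.hyps less.prems by auto
    then have "N $$ (k,j) = X $$ (k,j)" using key less.prems by blast
    then show ?case using Nent[of k j] less.prems j by simp
  qed
  show "\<And>k. j < k \<Longrightarrow> k < d \<Longrightarrow> (W * L) $$ (k,j) = 0" using Z unfolding X_def by blast
  have "N $$ (j,j) = X $$ (j,j)" using key[OF j] Z by blast
  then show "(W * L) $$ (j,j) = 1 / D j" using Nent[OF j j] unfolding X_def by simp
qed

lemma part2:
  assumes sc: "sample_corr d \<Sigma>" and lam: "lam > 0" and opt: "glasso_opt d \<Sigma> lam S"
    and supp: "\<forall>i<d. \<forall>j<d. i \<noteq> j \<longrightarrow> (S $$ (i,j) \<noteq> 0 \<longleftrightarrow> \<bar>\<Sigma> $$ (i,j)\<bar> > lam)"
    and lam2: "lam \<ge> 1/2"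
    and SW: "S * W = 1\<^sub>m d" and WS: "W * S = 1\<^sub>m d" and W: "W \<in> carrier_mat d d" and pdW: "pd_mat d W"
    and peo: "natural_peo d (thr_adj d \<Sigma> lam)"
  shows "S = Lmat d (thr_adj d \<Sigma> lam) (Cpart d \<Sigma> lam) * Dmat d (thr_adj d \<Sigma> lam) (Cpart d \<Sigma> lam)
             * (Lmat d (thr_adj d \<Sigma> lam) (Cpart d \<Sigma> lam))\<^sup>T"
proof -
  define adj where "adj = thr_adj d \<Sigma> lam"
  define C where "C = Cpart d \<Sigma> lam"
  have S: "pd_mat d S" using opt unfolding glasso_opt_def by auto
  have Sc: "S \<in> carrier_mat d d" using S by (rule pd_mat_carrier)
  note WP = W_props[OF sc lam opt supp lam2 SW W pdW]
  have Sig: "\<Sigma> \<in> carrier_mat d d" "\<Sigma>\<^sup>T = \<Sigma>" using sc unfolding sample_corr_def psd_mat_def sym_mat_def by auto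
  have Sigsym: "\<Sigma> $$ (a,b) = \<Sigma> $$ (b,a)" if "a < d" "b < d" for a b
  proof -
    have "\<Sigma>\<^sup>T $$ (b,a) = \<Sigma> $$ (a,b)" using Sig(1) that by simp
    then show ?thesis using Sig(2) by simp
  qed
  have adjb: "a < d" "b < d" "a \<noteq> b" if "adj a b" for a b using that unfolding adj_def thr_adj_def by auto
  have adjsym: "adj b a" if "adj a b" for a b using that Sigsym[of a b] unfolding adj_def thr_adj_def by auto
  have Cc: "C \<in> carrier_mat d d" unfolding C_def Cpart_def by simp
  have CW: "C $$ (a,b) = W $$ (a,b)" if "a < d" "b < d" "a = b \<or> adj a b" for a b
    using that WP adjb unfolding C_def adj_def by (auto simp: Cpart_def)
  have zero: "S $$ (a,b) = 0" if "a < d" "b < d" "a \<noteq> b" "\<not> adj a b" for a b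
    using that supp unfolding adj_def thr_adj_def by auto
  have Wsym: "W $$ (a,b) = W $$ (b,a)" if "a < d" "b < d" for a b using pd_mat_sym_entry[OF pdW that] .
  from ldl_mat[OF S] obtain L D where LD: "L \<in> carrier_mat d d" "\<forall>a<d. L $$ (a,a) = 1"
    "\<forall>a b. a < b \<longrightarrow> b < d \<longrightarrow> L $$ (a,b) = 0" "\<forall>a<d. 0 < D a" "S = L * dg d D * L\<^sup>T" by blast
  have peo': "natural_peo d adj" using peo unfolding adj_def .
  have NF: "L $$ (i,j) = 0" if "j < i" "i < d" "\<not> adj i j" for i j
    using nofill[OF LD(1-5) peo' zero] that by blast
  have col: "Lcol C (higher_nbrs d adj j) j = vec (card (higher_nbrs d adj j)) (\<lambda>p. L $$ (pick (higher_nbrs d adj j) p, j))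
      \<and> inverse (C $$ (j,j) + col (submatrix C (higher_nbrs d adj j) {j}) 0 \<bullet> Lcol C (higher_nbrs d adj j) j) = D j"
    if j: "j < d" for j
  proof -
    define I where "I = higher_nbrs d adj j"
    have Isub: "I \<subseteq> {..<d}" unfolding I_def higher_nbrs_def by auto
    have fin: "finite I" using Isub finite_subset by blast
    have Imem: "j < m \<and> m < d \<and> adj m j" if "m \<in> I" for m using that unfolding I_def higher_nbrs_def by auto
    have jI: "j \<notin> I" unfolding I_def higher_nbrs_def by auto
    define n where "n = card I"
    have cardI: "card {i. i < dim_row C \<and> i \<in> I} = n" unfolding n_def
    proof -
      have "{i. i < dim_row C \<and> i \<in> I} = I" using Isub Cc by auto
      then show "card {i. i < dim_row C \<and> i \<in> I} = card I" by simp
    qed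
    have cardI': "card {i. i < dim_col C \<and> i \<in> I} = n" unfolding n_def
    proof -
      have "{i. i < dim_col C \<and> i \<in> I} = I" using Isub Cc by auto
      then show "card {i. i < dim_col C \<and> i \<in> I} = card I" by simp
    qed
    have card1: "card {i. i < dim_col C \<and> i \<in> {j}} = 1"
    proof -
      have "{i. i < dim_col C \<and> i \<in> {j}} = {j}" using Cc j by auto
      then show ?thesis by simp
    qed
    have pickI: "pick I p \<in> I" if "p < n" for p using pick_in_set[of p I] that unfolding n_def by simp
    have pickj: "pick {j} 0 = j" by (simp add: Least_equality)
    define A where "A = submatrix C I I"
    have Ac: "A \<in> carrier_mat n n" unfolding A_def
      by (rule carrier_matI) (simp_all only: dim_submatrix cardI cardI')
    have Aent: "A $$ (p,q) = W $$ (pick I p, pick I q)" if pq: "p < n" "q < n" for p q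
    proof -
      have "A $$ (p,q) = C $$ (pick I p, pick I q)" unfolding A_def
        by (rule submatrix_index) (use pq cardI cardI' in auto)
      also have "\<dots> = W $$ (pick I p, pick I q)"
      proof (rule CW)
        show "pick I p < d" "pick I q < d" using Imem pickI pq by auto
        show "pick I p = pick I q \<or> adj (pick I p) (pick I q)"
        proof (cases "pick I p = pick I q")
          case False
          have "\<forall>a\<in>higher_nbrs d adj j. \<forall>b\<in>higher_nbrs d adj j. a \<noteq> b \<longrightarrow> adj a b"
            using peo' j unfolding natural_peo_def by blast
          then show ?thesis using False pickI pq unfolding I_def by blast
        qed simp
      qed
      finally show ?thesis .
    qed
    define c where "c = col (submatrix C I {j}) 0"
    have cc: "c \<in> carrier_vec n" unfolding c_def
      by (rule carrier_vecI) (simp only: dim_col dim_submatrix cardI)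
    have cent: "c $ p = W $$ (pick I p, j)" if p: "p < n" for p
    proof -
      have "c $ p = submatrix C I {j} $$ (p, 0)" unfolding c_def
        by (rule index_col) (simp_all only: dim_submatrix cardI card1 p zero_less_one)
      also have "\<dots> = C $$ (pick I p, pick {j} 0)"
        by (rule submatrix_index) (use p cardI card1 in auto)
      also have "\<dots> = W $$ (pick I p, j)" unfolding pickj
        using CW[of "pick I p" j] Imem[OF pickI[OF p]] j by simp
      finally show ?thesis .
    qed
    define l where "l = vec n (\<lambda>p. L $$ (pick I p, j))"
    have lc: "l \<in> carrier_vec n" unfolding l_def by simp
    note Xf = Xfacts[OF LD(1-5) SW W j]
    have Xsum: "(W * L) $$ (k,j) = W $$ (k,j) + (\<Sum>m\<in>I. W $$ (k,m) * L $$ (m,j))" if k: "k < d" for k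
    proof -
      have "(W * L) $$ (k,j) = (\<Sum>m<d. W $$ (k,m) * L $$ (m,j))" by (rule mult_entry[OF W LD(1) k j])
      also have "\<dots> = (\<Sum>m\<in>insert j I. W $$ (k,m) * L $$ (m,j))"
      proof (rule sum_restrict)
        show "insert j I \<subseteq> {..<d}" using Isub j by auto
        fix m assume m: "m < d" "m \<notin> insert j I"
        show "W $$ (k,m) * L $$ (m,j) = 0"
        proof (cases "m < j")
          case True then show ?thesis using LD(3) j by simp
        next
          case False
          then have "j < m" using m by auto
          moreover have "\<not> adj m j" using m \<open>j < m\<close> unfolding I_def higher_nbrs_def by auto
          ultimately show ?thesis using NF m by simp
        qed
      qed
      also have "\<dots> = W $$ (k,j) * L $$ (j,j) + (\<Sum>m\<in>I. W $$ (k,m) * L $$ (m,j))"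
        using fin jI by simp
      finally show ?thesis using LD(2) j by simp
    qed
    have Al: "A *\<^sub>v l = - c"
    proof (rule eq_vecI)
      show "dim_vec (A *\<^sub>v l) = dim_vec (- c)" using Ac cc by simp
      fix p assume "p < dim_vec (- c)"
      then have p: "p < n" using cc by simp
      have "(A *\<^sub>v l) $ p = (\<Sum>q<n. A $$ (p,q) * l $ q)" by (rule mv_entry[OF Ac lc p])
      also have "\<dots> = (\<Sum>q<n. W $$ (pick I p, pick I q) * L $$ (pick I q, j))"
        by (intro sum.cong refl) (simp add: Aent p l_def)
      also have "\<dots> = (\<Sum>m\<in>I. W $$ (pick I p, m) * L $$ (m, j))"
        unfolding n_def by (rule pick_reindex[OF fin])
      also have "\<dots> = (W * L) $$ (pick I p, j) - W $$ (pick I p, j)"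
        using Xsum[of "pick I p"] Imem[OF pickI[OF p]] by simp
      also have "\<dots> = - c $ p" using Xf(1)[of "pick I p"] Imem[OF pickI[OF p]] cent[OF p] by simp
      finally show "(A *\<^sub>v l) $ p = (- c) $ p" using p cc by simp
    qed
    have "det A \<noteq> 0"
    proof
      assume "det A = 0"
      then obtain x where x: "x \<in> carrier_vec n" "x \<noteq> 0\<^sub>v n" "A *\<^sub>v x = 0\<^sub>v n"
        using det_0_iff_vec_prod_zero[OF Ac] by blast
      have "x = 0\<^sub>v (card I)"
        by (rule principal_inj[OF pdW Isub]) (use Ac Aent x in \<open>auto simp: n_def\<close>)
      then show False using x unfolding n_def by simp
    qed
    then have "A \<in> Units (ring_mat TYPE(real) n ())" by (rule det_non_zero_imp_unit[OF Ac])
    then have "mat_inverse A \<noteq> None" using mat_inverse(1)[OF Ac, where b="()"] by blast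
    then obtain B where Bi: "mat_inverse A = Some B" by blast
    from mat_inverse(2)[OF Ac Bi] have B: "B * A = 1\<^sub>m n" "B \<in> carrier_mat n n" by auto
    have Lc: "Lcol C I j = l"
    proof -
      have "l = (B * A) *\<^sub>v l" using B lc by simp
      also have "\<dots> = B *\<^sub>v (A *\<^sub>v l)" using B(2) Ac lc by simp
      also have "\<dots> = B *\<^sub>v (- c)" unfolding Al ..
      also have "\<dots> = - (B *\<^sub>v c)" using B(2) cc by (intro eq_vecI) auto
      also have "\<dots> = Lcol C I j" unfolding Lcol_def c_def using Bi[unfolded A_def] by simp
      finally show ?thesis by simp
    qed
    have cl: "c \<bullet> l = 1 / D j - 1"
    proof -
      have "c \<bullet> l = (\<Sum>p<n. c $ p * l $ p)" by (rule sp_sum[OF cc lc])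
      also have "\<dots> = (\<Sum>p<n. W $$ (j, pick I p) * L $$ (pick I p, j))"
        by (intro sum.cong refl) (use Imem pickI j in \<open>auto simp: cent l_def Wsym\<close>)
      also have "\<dots> = (\<Sum>m\<in>I. W $$ (j, m) * L $$ (m, j))" unfolding n_def by (rule pick_reindex[OF fin])
      also have "\<dots> = (W * L) $$ (j,j) - W $$ (j,j)" using Xsum[OF j] by simp
      also have "\<dots> = 1 / D j - 1" using Xf(2) WP(1) j by simp
      finally show ?thesis .
    qed
    have Cjj: "C $$ (j,j) = 1" unfolding C_def Cpart_def using j by simp
    show ?thesis unfolding I_def[symmetric] Lc
      using cl Cjj LD(4) j unfolding c_def l_def n_def by simp
  qed
  have Lm: "Lmat d adj C = L"
  proof (rule eq_matI)
    fix i j assume "i < dim_row L" "j < dim_col L"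
    then have ij: "i < d" "j < d" using LD(1) by auto
    show "Lmat d adj C $$ (i,j) = L $$ (i,j)"
    proof (cases "i = j")
      case True then show ?thesis unfolding Lmat_def using ij LD(2) by simp
    next
      case False
      show ?thesis
      proof (cases "i \<in> higher_nbrs d adj j")
        case True
        define I where "I = higher_nbrs d adj j"
        have fin: "finite I" unfolding I_def higher_nbrs_def by auto
        have iI: "i \<in> I" using True unfolding I_def .
        have lt: "card {a\<in>I. a < i} < card I" by (rule card_less_idx[OF fin iI])
        have "Lmat d adj C $$ (i,j) = Lcol C I j $ card {a\<in>I. a < i}"
          unfolding Lmat_def I_def using ij False True by simp
        also have "\<dots> = L $$ (pick I (card {a\<in>I. a < i}), j)"
          using col[OF ij(2)] lt unfolding I_def by simp
        also have "\<dots> = L $$ (i,j)" using pick_card_in_set[OF iI] by simp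
        finally show ?thesis .
      next
        case nb: False
        have "L $$ (i,j) = 0"
        proof (cases "i < j")
          case True then show ?thesis using LD(3) ij by simp
        next
          case gt: False
          then have "j < i" using False by simp
          then have "\<not> adj i j" using nb ij unfolding higher_nbrs_def by auto
          then show ?thesis using NF \<open>j < i\<close> ij by simp
        qed
        then show ?thesis unfolding Lmat_def using ij False nb by simp
      qed
    qed
  qed (use LD(1) in \<open>auto simp: Lmat_def\<close>)
  have Dm: "Dmat d adj C = dg d D"
  proof (rule eq_matI)
    fix i j assume "i < dim_row (dg d D)" "j < dim_col (dg d D)"
    then have ij: "i < d" "j < d" by (auto simp: dg_def)
    show "Dmat d adj C $$ (i,j) = dg d D $$ (i,j)"
      unfolding Dmat_def dg_def using ij col[OF ij(2)] by auto
  qed (auto simp: Dmat_def dg_def)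
  show ?thesis using LD(5) Lm Dm unfolding adj_def C_def by simp
qed


theorem theorem3:
  fixes d :: nat and \<Sigma> S :: "real mat" and lam :: real
  assumes "sample_corr d \<Sigma>"
    and "lam > 0"
    and "glasso_opt d \<Sigma> lam S"
    and "\<forall>i<d. \<forall>j<d. i \<noteq> j \<longrightarrow> (S $$ (i,j) \<noteq> 0 \<longleftrightarrow> \<bar>\<Sigma> $$ (i,j)\<bar> > lam)"
    and "lam \<ge> 1/2"
  shows "unique_maxdet_completion d (pattern d \<Sigma> lam) (Cpart d \<Sigma> lam) (the (mat_inverse S))
    \<and> (chordal d (thr_adj d \<Sigma> lam) \<longrightarrow> natural_peo d (thr_adj d \<Sigma> lam) \<longrightarrow>
         S = Lmat d (thr_adj d \<Sigma> lam) (Cpart d \<Sigma> lam) * Dmat d (thr_adj d \<Sigma> lam) (Cpart d \<Sigma> lam)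
             * (Lmat d (thr_adj d \<Sigma> lam) (Cpart d \<Sigma> lam))\<^sup>T)"
proof -
  have S: "pd_mat d S" using assms(3) unfolding glasso_opt_def by auto
  from inv_setup[OF S] obtain W where W: "mat_inverse S = Some W" "S * W = 1\<^sub>m d" "W * S = 1\<^sub>m d"
    "W \<in> carrier_mat d d" "pd_mat d W" by blast
  have "unique_maxdet_completion d (pattern d \<Sigma> lam) (Cpart d \<Sigma> lam) W"
    by (rule part1[OF assms W(2-5)])
  moreover have "natural_peo d (thr_adj d \<Sigma> lam) \<Longrightarrow>
         S = Lmat d (thr_adj d \<Sigma> lam) (Cpart d \<Sigma> lam) * Dmat d (thr_adj d \<Sigma> lam) (Cpart d \<Sigma> lam)
             * (Lmat d (thr_adj d \<Sigma> lam) (Cpart d \<Sigma> lam))\<^sup>T"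
    by (rule part2[OF assms W(2-5)])
  ultimately show ?thesis using W(1) by simp
qed

end
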